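(* The polynomials in $S(\mathfrak h)^{W_I}$ separate the points $\widetilde\lambda$, $\lambda\in P_I^+$: for all $\lambda\neq\lambda'$ in $P_I^+$ there exists $q\in S(\mathfrak h)^{W_I}$ with $q(\widetilde\lambda)\neq q(\widetilde{\lambda'})$.
   Context: Let $\mathfrak a$ be a Euclidean space with inner product $(\cdot,\cdot)$, $\mathfrak h=\mathfrak a\otimes\mathbb C$, and $S(\mathfrak h)$ the symmetric algebra, viewed as polynomial functions on $\mathfrak h^*$. Let $R\subset\mathfrak a^*$ be a root system with Weyl group $W$ (acting on $\mathfrak h$ and $S(\mathfrak h)$), positive roots $R^+$, simple reflections $S$. Let $P$ be the weight lattice, $P^+$ the dominant weights and $P^-=-P^+$. Let $k=(k_\alpha)_{\alpha\in R}$ be a $W$-invariant multiplicity function with $k_\alpha\ge0$ and $\rho(k)=\frac12\sum_{\alpha\in R^+}k_\alpha\alpha$. For $\lambda\in P$ let $v(\lambda)$ be the minimal length element of $W$ with $v(\lambda)\lambda\in P^-$ and $\widetilde\lambda=\lambda-v(\lambda)^{-1}\rho(k)$. Let $I\subset S$, $W_I$ the parabolic subgroup generated by $I$, $R_I^+$ its positive roots and $P_I^+=\{\lambda\in P:(\lambda,\alpha)\ge0\ \forall\alpha\in R_I^+\}$. *)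

theory Defs
  imports "HOL-Analysis.Analysis"
begin

text \<open>We identify the real form a (and its dual a* via the inner product) with a
Euclidean space 'a. Roots, weights are vectors of 'a.\<close>

definition refl :: "'a::euclidean_space \<Rightarrow> 'a \<Rightarrow> 'a" where
  "refl \<alpha> x = x - (2 * (x \<bullet> \<alpha>) / (\<alpha> \<bullet> \<alpha>)) *\<^sub>R \<alpha>"

text \<open>(Possibly non-reduced) crystallographic root system spanning the space.\<close>
definition root_system :: "'a::euclidean_space set \<Rightarrow> bool" where
  "root_system R \<longleftrightarrow> finite R \<and> 0 \<notin> R \<and> span R = UNIV \<and>
     (\<forall>\<alpha>\<in>R. refl \<alpha> ` R = R) \<and>
     (\<forall>\<alpha>\<in>R. \<forall>\<beta>\<in>R. 2 * (\<beta> \<bullet> \<alpha>) / (\<alpha> \<bullet> \<alpha>) \<in> \<int>)"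

inductive_set refl_group :: "'a::euclidean_space set \<Rightarrow> ('a \<Rightarrow> 'a) set" for A where
  id: "id \<in> refl_group A"
| step: "w \<in> refl_group A \<Longrightarrow> \<alpha> \<in> A \<Longrightarrow> refl \<alpha> \<circ> w \<in> refl_group A"

abbreviation weyl_group :: "'a::euclidean_space set \<Rightarrow> ('a \<Rightarrow> 'a) set" where
  "weyl_group R \<equiv> refl_group R"

text \<open>Positive system determined by a regular element h (every positive system arises so).\<close>
definition pos_roots :: "'a::euclidean_space set \<Rightarrow> 'a \<Rightarrow> 'a set" where
  "pos_roots R h = {\<alpha>\<in>R. \<alpha> \<bullet> h > 0}"

definition simple_roots :: "'a::euclidean_space set \<Rightarrow> 'a \<Rightarrow> 'a set" where
  "simple_roots R h = {\<alpha>\<in>pos_roots R h.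
      \<not> (\<exists>\<beta>\<in>pos_roots R h. \<exists>\<gamma>\<in>pos_roots R h. \<alpha> = \<beta> + \<gamma>)}"

definition weight_lattice :: "'a::euclidean_space set \<Rightarrow> 'a set" where
  "weight_lattice R = {l. \<forall>\<alpha>\<in>R. 2 * (l \<bullet> \<alpha>) / (\<alpha> \<bullet> \<alpha>) \<in> \<int>}"

definition dominant :: "'a::euclidean_space set \<Rightarrow> 'a \<Rightarrow> 'a set" where
  "dominant R h = {l\<in>weight_lattice R. \<forall>\<alpha>\<in>pos_roots R h. l \<bullet> \<alpha> \<ge> 0}"

definition antidominant :: "'a::euclidean_space set \<Rightarrow> 'a \<Rightarrow> 'a set" where
  "antidominant R h = uminus ` dominant R h"

definition weyl_length :: "'a::euclidean_space set \<Rightarrow> 'a \<Rightarrow> ('a \<Rightarrow> 'a) \<Rightarrow> nat" where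
  "weyl_length R h w = (LEAST n. \<exists>as. length as = n \<and> set as \<subseteq> simple_roots R h \<and>
      w = foldr (\<lambda>\<alpha> f. refl \<alpha> \<circ> f) as id)"

definition vmin :: "'a::euclidean_space set \<Rightarrow> 'a \<Rightarrow> 'a \<Rightarrow> ('a \<Rightarrow> 'a)" where
  "vmin R h l = (THE w. w \<in> weyl_group R \<and> w l \<in> antidominant R h \<and>
      (\<forall>w'\<in>weyl_group R. w' l \<in> antidominant R h \<longrightarrow> weyl_length R h w \<le> weyl_length R h w'))"

definition rho :: "'a::euclidean_space set \<Rightarrow> 'a \<Rightarrow> ('a \<Rightarrow> real) \<Rightarrow> 'a" where
  "rho R h k = (1/2) *\<^sub>R (\<Sum>\<alpha>\<in>pos_roots R h. k \<alpha> *\<^sub>R \<alpha>)"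

definition multiplicity :: "'a::euclidean_space set \<Rightarrow> ('a \<Rightarrow> real) \<Rightarrow> bool" where
  "multiplicity R k \<longleftrightarrow> (\<forall>\<alpha>\<in>R. k \<alpha> \<ge> 0) \<and>
     (\<forall>w\<in>weyl_group R. \<forall>\<alpha>\<in>R. k (w \<alpha>) = k \<alpha>)"

definition shifted :: "'a::euclidean_space set \<Rightarrow> 'a \<Rightarrow> ('a \<Rightarrow> real) \<Rightarrow> 'a \<Rightarrow> 'a" where
  "shifted R h k l = l - inv (vmin R h l) (rho R h k)"

text \<open>S(h), h = a (x) C, as complex polynomial functions on h*; restricted to the real
form a* (= 'a via the inner product), which determines the polynomial.\<close>
inductive_set poly_fun :: "('a::euclidean_space \<Rightarrow> complex) set" where
  const: "(\<lambda>x. c) \<in> poly_fun"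
| lin: "(\<lambda>x. complex_of_real (x \<bullet> v)) \<in> poly_fun"
| add: "p \<in> poly_fun \<Longrightarrow> q \<in> poly_fun \<Longrightarrow> (\<lambda>x. p x + q x) \<in> poly_fun"
| mult: "p \<in> poly_fun \<Longrightarrow> q \<in> poly_fun \<Longrightarrow> (\<lambda>x. p x * q x) \<in> poly_fun"

definition parabolic_pos_roots :: "'a::euclidean_space set \<Rightarrow> 'a \<Rightarrow> 'a set \<Rightarrow> 'a set" where
  "parabolic_pos_roots R h I = pos_roots R h \<inter> span I"

definition parabolic_dominant :: "'a::euclidean_space set \<Rightarrow> 'a \<Rightarrow> 'a set \<Rightarrow> 'a set" where
  "parabolic_dominant R h I = {l\<in>weight_lattice R.
      \<forall>\<alpha>\<in>parabolic_pos_roots R h I. l \<bullet> \<alpha> \<ge> 0}"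

end

theory Submission
  imports Defs
begin

lemma refl_linear: "linear (refl a)"
  unfolding refl_def
  by (rule linearI) (auto simp: inner_add_left algebra_simps add_divide_distrib scaleR_add_left[symmetric] simp del: scaleR_add_left)

lemma refl_zero: "refl 0 = id"
  by (auto simp: refl_def fun_eq_iff)

lemma refl_inner: "refl a x \<bullet> refl a y = x \<bullet> y"
proof (cases "a = 0")
  case True then show ?thesis by (simp add: refl_zero)
next
  case False
  then have aa: "a \<bullet> a \<noteq> 0" by simp
  show ?thesis unfolding refl_def
    using aa by (simp add: inner_diff_left inner_diff_right inner_commute field_simps)
qed

lemma refl_refl[simp]: "refl a (refl a x) = x"
proof (cases "a = 0")
  case True then show ?thesis by (simp add: refl_zero)
next
  case False
  then have aa: "a \<bullet> a \<noteq> 0" by simp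
  show ?thesis unfolding refl_def
    using aa by (simp add: inner_diff_left algebra_simps)
qed

lemma refl_comp_refl[simp]: "refl a \<circ> refl a = id"
  by (auto simp: fun_eq_iff)

lemma refl_self[simp]: "refl a a = - a"
  by (cases "a = 0") (auto simp: refl_def scaleR_2)

lemma refl_scale: "c \<noteq> 0 \<Longrightarrow> refl (c *\<^sub>R a) = refl a"
  by (auto simp: refl_def fun_eq_iff field_simps)

lemma refl_neg: "refl (- a) = refl a"
  using refl_scale[of "-1" a] by simp

lemma refl_conj:
  assumes "linear w" "\<And>x y. w x \<bullet> w y = x \<bullet> y"
  shows "w (refl b x) = refl (w b) (w x)"
  unfolding refl_def using assms
  by (simp add: linear_diff linear_scale)

definition wprod :: "'a::euclidean_space list \<Rightarrow> 'a \<Rightarrow> 'a" where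
  "wprod as = foldr (\<lambda>\<alpha> f. refl \<alpha> \<circ> f) as id"

lemma wprod_Nil[simp]: "wprod [] = id" and wprod_Cons[simp]: "wprod (a # as) = refl a \<circ> wprod as"
  by (auto simp: wprod_def)

lemma wprod_append[simp]: "wprod (as @ bs) = wprod as \<circ> wprod bs"
  by (induction as) auto

lemma RG_comp: "w1 \<in> refl_group A \<Longrightarrow> w2 \<in> refl_group A \<Longrightarrow> w1 \<circ> w2 \<in> refl_group A"
  by (induction rule: refl_group.induct) (auto simp: o_assoc[symmetric] intro: refl_group.step)

lemma RG_id'[simp,intro]: "(\<lambda>x. x) \<in> refl_group A"
  using refl_group.id unfolding id_def .

lemma RG_gen: "a \<in> A \<Longrightarrow> refl a \<in> refl_group A"
  using refl_group.step[OF refl_group.id, of a A] by simp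

lemma RG_mono: "w \<in> refl_group A \<Longrightarrow> A \<subseteq> B \<Longrightarrow> w \<in> refl_group B"
  by (induction rule: refl_group.induct) (auto intro: refl_group.intros)

lemma RG_linear: "w \<in> refl_group A \<Longrightarrow> linear w"
proof (induction rule: refl_group.induct)
  case id then show ?case by (simp add: id_def linear_ident)
next
  case (step w a) then show ?case using linear_compose[OF step.IH refl_linear[of a]] by (simp add: comp_def)
qed

lemma RG_inner: "w \<in> refl_group A \<Longrightarrow> w x \<bullet> w y = x \<bullet> y"
  by (induction rule: refl_group.induct) (auto simp: refl_inner)

lemma RG_words: "w \<in> refl_group A \<longleftrightarrow> (\<exists>as. set as \<subseteq> A \<and> w = wprod as)"
proof
  assume "w \<in> refl_group A" then show "\<exists>as. set as \<subseteq> A \<and> w = wprod as"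
  proof (induction rule: refl_group.induct)
    case id then show ?case by (intro exI[of _ "[]"]) (auto simp: id_def)
  next
    case (step w a) then obtain as where "set as \<subseteq> A" "w = wprod as" by blast
    then show ?case using step by (intro exI[of _ "a # as"]) auto
  qed
next
  assume "\<exists>as. set as \<subseteq> A \<and> w = wprod as"
  then obtain as where "set as \<subseteq> A" "w = wprod as" by blast
  then show "w \<in> refl_group A"
  proof (induction as arbitrary: w)
    case Nil then show ?case using refl_group.id by simp
  next
    case (Cons a as) then show ?case using refl_group.step[of "wprod as" A a] by (auto simp: comp_def)
  qed
qed

lemma RG_inverse: "w \<in> refl_group A \<Longrightarrow> \<exists>w'\<in>refl_group A. w' \<circ> w = id \<and> w \<circ> w' = id"
proof (induction rule: refl_group.induct)
  case id then show ?case by (auto intro: refl_group.id)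
next
  case (step w a)
  then obtain w' where w': "w' \<in> refl_group A" "w' \<circ> w = id" "w \<circ> w' = id" by blast
  have "w' \<circ> refl a \<in> refl_group A" using w' step by (intro RG_comp RG_gen) auto
  moreover have "(w' \<circ> refl a) \<circ> (refl a \<circ> w) = id"
    using w' by (simp add: o_assoc) (metis comp_assoc comp_id refl_comp_refl)
  moreover have "(refl a \<circ> w) \<circ> (w' \<circ> refl a) = id"
    using w' by (metis comp_assoc comp_id refl_comp_refl)
  ultimately show ?case by blast
qed

lemma RG_bij: "w \<in> refl_group A \<Longrightarrow> bij w"
  using RG_inverse[of w A] by (auto intro: o_bij)

lemma RG_inv_mem: "w \<in> refl_group A \<Longrightarrow> inv w \<in> refl_group A"
proof -
  assume w: "w \<in> refl_group A"
  then obtain w' where w': "w' \<in> refl_group A" "w' \<circ> w = id" "w \<circ> w' = id" using RG_inverse by blast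
  then have "inv w = w'" by (metis inv_unique_comp)
  then show ?thesis using w' by simp
qed

lemma RG_inv_l[simp]: "w \<in> refl_group A \<Longrightarrow> inv w (w x) = x"
  using RG_bij bij_inv_eq_iff by metis

lemma RG_inv_r[simp]: "w \<in> refl_group A \<Longrightarrow> w (inv w x) = x"
  using RG_bij bij_inv_eq_iff by metis

lemma RG_preserve:
  assumes "w \<in> refl_group A" "\<And>a x. a \<in> A \<Longrightarrow> x \<in> X \<Longrightarrow> refl a x \<in> X" "x \<in> X"
  shows "w x \<in> X"
  using assms by (induction arbitrary: x rule: refl_group.induct) auto

lemma RG_fix:
  assumes "w \<in> refl_group A" "\<And>a. a \<in> A \<Longrightarrow> refl a x = x"
  shows "w x = x"
  using assms by (induction rule: refl_group.induct) auto

lemma int_prod4: "(m::int) > 0 \<Longrightarrow> n > 0 \<Longrightarrow> m * n = 4 \<Longrightarrow> m = 1 \<or> m = 2 \<or> m = 4"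
proof -
  assume a: "m > 0" "n > 0" "m * n = 4"
  then have "m \<le> 4" by (smt (verit) mult_le_cancel_left1)
  then have "m \<in> {1,2,3,4}" using a by auto
  moreover have "m \<noteq> 3"
  proof
    assume "m = 3" then have "3 * n = 4" using a by simp
    then show False by presburger
  qed
  ultimately show ?thesis by auto
qed

lemma int_prod_lt4: "(m::int) > 0 \<Longrightarrow> n > 0 \<Longrightarrow> m * n < 4 \<Longrightarrow> m = 1 \<or> n = 1"
proof (rule ccontr)
  assume a: "m > 0" "n > 0" "m * n < 4" "\<not> (m = 1 \<or> n = 1)"
  then have "m \<ge> 2" "n \<ge> 2" by auto
  then have "m * n \<ge> 2 * 2" by (intro mult_mono) auto
  then show False using a by simp
qed

locale rsys =
  fixes R :: "'a::euclidean_space set" and h :: 'a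
  assumes rs: "root_system R" and reg: "\<forall>\<alpha>\<in>R. \<alpha> \<bullet> h \<noteq> 0"
begin

abbreviation "Rp \<equiv> pos_roots R h"
abbreviation "S \<equiv> simple_roots R h"
abbreviation "Rn \<equiv> {\<alpha>\<in>R. \<alpha> \<bullet> h < 0}"
abbreviation "W \<equiv> refl_group R"

lemma finR: "finite R" and zero_notin: "0 \<notin> R" and spanR: "span R = UNIV"
  and refl_R: "\<alpha> \<in> R \<Longrightarrow> refl \<alpha> ` R = R"
  and integ: "\<alpha> \<in> R \<Longrightarrow> \<beta> \<in> R \<Longrightarrow> 2 * (\<beta> \<bullet> \<alpha>) / (\<alpha> \<bullet> \<alpha>) \<in> \<int>"
  using rs by (auto simp: root_system_def)

lemma refl_in_R: "\<alpha> \<in> R \<Longrightarrow> \<beta> \<in> R \<Longrightarrow> refl \<alpha> \<beta> \<in> R"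
  using refl_R by blast

lemma neg_R: "\<alpha> \<in> R \<Longrightarrow> - \<alpha> \<in> R"
  using refl_in_R[of \<alpha> \<alpha>] by simp

lemma Rp_def': "\<alpha> \<in> Rp \<longleftrightarrow> \<alpha> \<in> R \<and> \<alpha> \<bullet> h > 0"
  by (simp add: pos_roots_def)

lemma R_split: "\<alpha> \<in> R \<Longrightarrow> \<alpha> \<in> Rp \<or> \<alpha> \<in> Rn"
  using reg by (auto simp: Rp_def' less_linear)

lemma Rn_neg: "\<alpha> \<in> Rn \<longleftrightarrow> - \<alpha> \<in> Rp"
  using neg_R by (force simp: Rp_def')

lemma Rp_not_Rn: "\<alpha> \<in> Rp \<Longrightarrow> \<alpha> \<notin> Rn"
  by (auto simp: Rp_def')

lemma nonzero: "\<alpha> \<in> R \<Longrightarrow> \<alpha> \<noteq> 0"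
  using zero_notin by auto

lemma W_R: "w \<in> refl_group A \<Longrightarrow> A \<subseteq> R \<Longrightarrow> \<beta> \<in> R \<Longrightarrow> w \<beta> \<in> R"
  by (erule RG_preserve) (auto intro: refl_in_R)

lemma W_finite: "finite W"
proof -
  let ?f = "\<lambda>w. restrict w R"
  have "?f ` W \<subseteq> (\<Pi>\<^sub>E \<beta>\<in>R. R)" using W_R by auto
  moreover have "finite (\<Pi>\<^sub>E \<beta>\<in>R. R)" using finR by (intro finite_PiE) auto
  ultimately have fin: "finite (?f ` W)" by (rule finite_subset)
  have "inj_on ?f W"
  proof (rule inj_onI)
    fix w1 w2 assume w: "w1 \<in> W" "w2 \<in> W" "?f w1 = ?f w2"
    then have eq: "\<And>b. b \<in> R \<Longrightarrow> w1 b = w2 b" by (metis restrict_apply')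
    show "w1 = w2"
    proof
      fix x
      have "x \<in> span R" using spanR by simp
      then show "w1 x = w2 x" using linear_eq_on_span[OF RG_linear[OF w(1)] RG_linear[OF w(2)]] eq
        by blast
    qed
  qed
  then show ?thesis using fin finite_image_iff by blast
qed

lemma prop_root:
  assumes "\<alpha> \<in> R" "c *\<^sub>R \<alpha> \<in> R" "c > 0"
  shows "c = 1/2 \<or> c = 1 \<or> c = 2"
proof -
  have a0: "\<alpha> \<bullet> \<alpha> \<noteq> 0" using nonzero assms by simp
  have "2 * ((c *\<^sub>R \<alpha>) \<bullet> \<alpha>) / (\<alpha> \<bullet> \<alpha>) \<in> \<int>" using integ assms by blast
  then have "2 * c \<in> \<int>" using a0 by simp
  then obtain m where m: "2 * c = of_int m" by (auto elim: Ints_cases)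
  have "2 * (\<alpha> \<bullet> (c *\<^sub>R \<alpha>)) / ((c *\<^sub>R \<alpha>) \<bullet> (c *\<^sub>R \<alpha>)) \<in> \<int>" using integ assms by blast
  then have "2 / c \<in> \<int>" using a0 assms(3) by (simp add: power2_eq_square)
  then obtain n where n: "2 / c = of_int n" by (auto elim: Ints_cases)
  have "of_int (m * n) = (4::real)" proof -
    have "of_int (m * n) = (2 * c) * (2 / c)" by (simp add: m n)
    also have "\<dots> = 4" using assms(3) by simp
    finally show ?thesis .
  qed
  then have "m * n = 4" by linarith
  moreover have "m > 0" "n > 0"
  proof -
    have "of_int m > (0::real)" "of_int n > (0::real)" using assms(3) by (simp_all flip: m n)
    then show "m > 0" "n > 0" by simp_all
  qed
  ultimately have "m = 1 \<or> m = 2 \<or> m = 4" using int_prod4 by blast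
  then show ?thesis using m by auto
qed

lemma diff_root:
  assumes ab: "\<alpha> \<in> R" "\<beta> \<in> R" and pos: "\<alpha> \<bullet> \<beta> > 0" and np: "\<And>c. \<beta> \<noteq> c *\<^sub>R \<alpha>"
  shows "\<alpha> - \<beta> \<in> R"
proof -
  have a0: "\<alpha> \<noteq> 0" "\<beta> \<noteq> 0" using nonzero[OF ab(1)] nonzero[OF ab(2)] by auto
  have "\<bar>\<alpha> \<bullet> \<beta>\<bar> \<noteq> norm \<alpha> * norm \<beta>"
  proof
    assume "\<bar>\<alpha> \<bullet> \<beta>\<bar> = norm \<alpha> * norm \<beta>"
    then have "norm \<alpha> *\<^sub>R \<beta> = norm \<beta> *\<^sub>R \<alpha> \<or> norm \<alpha> *\<^sub>R \<beta> = - norm \<beta> *\<^sub>R \<alpha>"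
      by (simp add: norm_cauchy_schwarz_abs_eq)
    moreover have key: "\<And>t. norm \<alpha> *\<^sub>R \<beta> = t *\<^sub>R \<alpha> \<Longrightarrow> \<beta> = (t / norm \<alpha>) *\<^sub>R \<alpha>"
    proof -
      fix t assume e: "norm \<alpha> *\<^sub>R \<beta> = t *\<^sub>R \<alpha>"
      have "\<beta> = (1 / norm \<alpha>) *\<^sub>R (norm \<alpha> *\<^sub>R \<beta>)" using a0 by simp
      also have "\<dots> = (t / norm \<alpha>) *\<^sub>R \<alpha>" using e by simp
      finally show "\<beta> = (t / norm \<alpha>) *\<^sub>R \<alpha>" .
    qed
    ultimately have "\<exists>c. \<beta> = c *\<^sub>R \<alpha>"
    proof (elim disjE)
      assume "norm \<alpha> *\<^sub>R \<beta> = norm \<beta> *\<^sub>R \<alpha>" then show ?thesis using key by blast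
    next
      assume "norm \<alpha> *\<^sub>R \<beta> = - norm \<beta> *\<^sub>R \<alpha>" then show ?thesis using key by blast
    qed
    then show False using np by blast
  qed
  then have lt: "\<bar>\<alpha> \<bullet> \<beta>\<bar> < norm \<alpha> * norm \<beta>" using Cauchy_Schwarz_ineq2[of \<alpha> \<beta>] by linarith
  have "(\<alpha> \<bullet> \<beta>)^2 < (norm \<alpha> * norm \<beta>)^2"
  proof -
    have "\<bar>\<alpha> \<bullet> \<beta>\<bar>^2 < (norm \<alpha> * norm \<beta>)^2" by (rule power_strict_mono) (use lt in auto)
    then show ?thesis by simp
  qed
  then have lt2: "(\<alpha> \<bullet> \<beta>)^2 < (\<alpha> \<bullet> \<alpha>) * (\<beta> \<bullet> \<beta>)"
    by (simp add: power_mult_distrib power2_norm_eq_inner)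
  have aa: "\<alpha> \<bullet> \<alpha> > 0" "\<beta> \<bullet> \<beta> > 0" using a0 by auto
  obtain m where m: "2 * (\<beta> \<bullet> \<alpha>) / (\<alpha> \<bullet> \<alpha>) = of_int m" using integ[OF ab(1,2)] by (auto elim: Ints_cases)
  obtain n where n: "2 * (\<alpha> \<bullet> \<beta>) / (\<beta> \<bullet> \<beta>) = of_int n" using integ[OF ab(2,1)] by (auto elim: Ints_cases)
  have "of_int m > (0::real)" unfolding m[symmetric] using aa pos by (simp add: inner_commute)
  then have "m > 0" by simp
  moreover have "of_int n > (0::real)" unfolding n[symmetric] using aa pos by simp
  then have "n > 0" by simp
  moreover have "of_int (m * n) < (4::real)"
  proof -
    have "of_int (m * n) = (2 * (\<beta> \<bullet> \<alpha>) / (\<alpha> \<bullet> \<alpha>)) * (2 * (\<alpha> \<bullet> \<beta>) / (\<beta> \<bullet> \<beta>))"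
      by (simp add: m n)
    also have "\<dots> = 4 * (\<alpha> \<bullet> \<beta>)^2 / ((\<alpha> \<bullet> \<alpha>) * (\<beta> \<bullet> \<beta>))"
      by (simp add: inner_commute power2_eq_square)
    also have "\<dots> < 4"
    proof -
      have p: "(\<alpha> \<bullet> \<alpha>) * (\<beta> \<bullet> \<beta>) > 0" using aa by simp
      show ?thesis using lt2 by (simp add: divide_less_eq p)
    qed
    finally show ?thesis .
  qed
  then have "m * n < 4" by linarith
  ultimately have "m = 1 \<or> n = 1" using int_prod_lt4 by blast
  then show ?thesis
  proof
    assume "m = 1"
    have "refl \<alpha> \<beta> = \<beta> - (of_int m) *\<^sub>R \<alpha>" by (simp add: refl_def m)
    then have "refl \<alpha> \<beta> = \<beta> - \<alpha>" using \<open>m = 1\<close> by simp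
    then have "\<beta> - \<alpha> \<in> R" using refl_in_R ab by metis
    then show ?thesis using neg_R[of "\<beta> - \<alpha>"] by simp
  next
    assume "n = 1"
    have "refl \<beta> \<alpha> = \<alpha> - (of_int n) *\<^sub>R \<beta>" by (simp add: refl_def n inner_commute)
    then have "refl \<beta> \<alpha> = \<alpha> - \<beta>" using \<open>n = 1\<close> by simp
    then show ?thesis using refl_in_R ab by metis
  qed
qed

end

context rsys begin

lemma S_sub: "S \<subseteq> Rp" by (auto simp: simple_roots_def)

lemma S_R: "\<alpha> \<in> S \<Longrightarrow> \<alpha> \<in> R" using S_sub by (auto simp: Rp_def')

lemma S_h: "\<alpha> \<in> S \<Longrightarrow> \<alpha> \<bullet> h > 0" using S_sub by (auto simp: Rp_def')

lemma S_not_sum: "\<alpha> \<in> S \<Longrightarrow> \<beta> \<in> Rp \<Longrightarrow> \<gamma> \<in> Rp \<Longrightarrow> \<alpha> \<noteq> \<beta> + \<gamma>"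
  by (auto simp: simple_roots_def)

lemma finS: "finite S" using finR S_R by (meson finite_subset subsetI)

lemma finRp: "finite Rp" using finR by (auto simp: pos_roots_def)

lemma pos_induct[consumes 1, case_names simple sum]:
  assumes "\<beta> \<in> Rp" "\<And>\<beta>. \<beta> \<in> S \<Longrightarrow> P \<beta>"
    "\<And>\<beta>1 \<beta>2. \<beta>1 \<in> Rp \<Longrightarrow> \<beta>2 \<in> Rp \<Longrightarrow> \<beta>1 + \<beta>2 \<in> Rp \<Longrightarrow> P \<beta>1 \<Longrightarrow> P \<beta>2 \<Longrightarrow> P (\<beta>1 + \<beta>2)"
  shows "P \<beta>"
  using assms(1)
proof (induction "card {\<gamma>\<in>Rp. \<gamma> \<bullet> h < \<beta> \<bullet> h}" arbitrary: \<beta> rule: less_induct)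
  case (less \<beta>)
  show ?case
  proof (cases "\<beta> \<in> S")
    case True then show ?thesis using assms(2) by blast
  next
    case False
    then obtain \<beta>1 \<beta>2 where b: "\<beta>1 \<in> Rp" "\<beta>2 \<in> Rp" "\<beta> = \<beta>1 + \<beta>2"
      using less.prems by (auto simp: simple_roots_def)
    have lt: "\<beta>1 \<bullet> h < \<beta> \<bullet> h" "\<beta>2 \<bullet> h < \<beta> \<bullet> h" using b by (auto simp: Rp_def' inner_add_left)
    have "card {\<gamma>\<in>Rp. \<gamma> \<bullet> h < \<beta>1 \<bullet> h} < card {\<gamma>\<in>Rp. \<gamma> \<bullet> h < \<beta> \<bullet> h}"
      by (rule psubset_card_mono) (use finRp lt b in auto)
    then have P1: "P \<beta>1" using less b by blast
    have "card {\<gamma>\<in>Rp. \<gamma> \<bullet> h < \<beta>2 \<bullet> h} < card {\<gamma>\<in>Rp. \<gamma> \<bullet> h < \<beta> \<bullet> h}"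
      by (rule psubset_card_mono) (use finRp lt b in auto)
    then have P2: "P \<beta>2" using less b by blast
    show ?thesis using assms(3)[OF b(1,2) _ P1 P2] b less.prems by simp
  qed
qed

lemma pos_decomp:
  assumes "\<beta> \<in> Rp"
  shows "\<exists>c. (\<forall>\<delta>. c \<delta> \<ge> 0) \<and> \<beta> = (\<Sum>\<delta>\<in>S. c \<delta> *\<^sub>R \<delta>)"
  using assms
proof (induction rule: pos_induct)
  case (simple \<beta>)
  have "(\<Sum>\<delta>\<in>S. (if \<delta> = \<beta> then 1 else 0) *\<^sub>R \<delta>) = (\<Sum>\<delta>\<in>S. (if \<delta> = \<beta> then \<delta> else 0))"
    by (rule sum.cong) auto
  also have "\<dots> = \<beta>" using simple finS by simp
  finally show ?case by (intro exI[of _ "\<lambda>\<delta>. if \<delta> = \<beta> then 1 else 0"]) auto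
next
  case (sum \<beta>1 \<beta>2)
  then obtain c1 c2 where c: "\<forall>\<delta>. c1 \<delta> \<ge> 0" "\<beta>1 = (\<Sum>\<delta>\<in>S. c1 \<delta> *\<^sub>R \<delta>)"
     "\<forall>\<delta>. c2 \<delta> \<ge> 0" "\<beta>2 = (\<Sum>\<delta>\<in>S. c2 \<delta> *\<^sub>R \<delta>)" by blast
  have "\<beta>1 + \<beta>2 = (\<Sum>\<delta>\<in>S. (c1 \<delta> + c2 \<delta>) *\<^sub>R \<delta>)"
    by (simp add: c(2,4) scaleR_add_left sum.distrib)
  then show ?case using c by (intro exI[of _ "\<lambda>\<delta>. c1 \<delta> + c2 \<delta>"]) (auto intro: add_nonneg_nonneg)
qed

lemma pos_ex_simple:
  assumes "\<beta> \<in> Rp" "x \<bullet> \<beta> > 0"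
  shows "\<exists>\<delta>\<in>S. x \<bullet> \<delta> > 0"
  using assms
proof (induction arbitrary: rule: pos_induct)
  case (simple \<beta>) then show ?case by blast
next
  case (sum \<beta>1 \<beta>2)
  then show ?case by (auto simp: inner_add_right) (metis add_nonpos_nonpos not_le)
qed

lemma obtuse:
  assumes "\<alpha> \<in> S" "\<delta> \<in> S" "\<alpha> \<noteq> \<delta>"
  shows "\<alpha> \<bullet> \<delta> \<le> 0"
proof (rule ccontr)
  assume "\<not> \<alpha> \<bullet> \<delta> \<le> 0"
  then have pos: "\<alpha> \<bullet> \<delta> > 0" by simp
  have aR: "\<alpha> \<in> R" "\<delta> \<in> R" using assms S_R by auto
  have aP: "\<alpha> \<in> Rp" "\<delta> \<in> Rp" using assms S_sub by auto
  show False
  proof (cases "\<exists>c. \<delta> = c *\<^sub>R \<alpha>")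
    case True
    then obtain c where c: "\<delta> = c *\<^sub>R \<alpha>" by blast
    have "c > 0" using S_h[OF assms(1)] S_h[OF assms(2)] c by (simp add: zero_less_mult_iff)
    then have "c = 1/2 \<or> c = 1 \<or> c = 2" using prop_root aR c by blast
    then show False
    proof (elim disjE)
      assume c2: "c = 1/2"
      have "\<delta> + \<delta> = 2 *\<^sub>R \<delta>" by (simp add: scaleR_2)
      also have "\<dots> = (2 * c) *\<^sub>R \<alpha>" by (simp add: c)
      also have "\<dots> = \<alpha>" using c2 by (simp add: mult.commute)
      finally have "\<alpha> = \<delta> + \<delta>" by simp
      then show False using S_not_sum[OF assms(1) aP(2) aP(2)] by simp
    next
      assume "c = 1" then show False using c assms by simp
    next
      assume "c = 2" then have "\<delta> = \<alpha> + \<alpha>" using c by (simp add: scaleR_2)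
      then show False using S_not_sum[OF assms(2) aP(1) aP(1)] by simp
    qed
  next
    case False
    then have d: "\<alpha> - \<delta> \<in> R" using diff_root[OF aR pos] by blast
    show False
    proof (cases "\<alpha> - \<delta> \<in> Rp")
      case True
      have "\<alpha> = (\<alpha> - \<delta>) + \<delta>" by simp
      then show False using S_not_sum[OF assms(1) True aP(2)] by simp
    next
      case False
      then have "\<delta> - \<alpha> \<in> Rp" using R_split[OF d] Rn_neg by auto
      have "\<delta> = (\<delta> - \<alpha>) + \<alpha>" by simp
      then show False using S_not_sum[OF assms(2) \<open>\<delta> - \<alpha> \<in> Rp\<close> aP(1)] by simp
    qed
  qed
qed

end

context rsys begin

lemma refl_pos_prop:
  assumes a: "\<alpha> \<in> S" and b: "\<beta> \<in> Rp" and n: "refl \<alpha> \<beta> \<in> Rn"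
  shows "\<exists>c>0. \<beta> = c *\<^sub>R \<alpha>"
proof -
  define t where "t = 2 * (\<beta> \<bullet> \<alpha>) / (\<alpha> \<bullet> \<alpha>)"
  have "refl \<alpha> \<beta> = \<beta> - t *\<^sub>R \<alpha>" by (simp add: refl_def t_def)
  then have g: "t *\<^sub>R \<alpha> - \<beta> \<in> Rp" using n Rn_neg by (metis minus_diff_eq)
  obtain cb where cb: "\<forall>\<delta>. cb \<delta> \<ge> 0" "\<beta> = (\<Sum>\<delta>\<in>S. cb \<delta> *\<^sub>R \<delta>)" using pos_decomp[OF b] by blast
  obtain cg where cg: "\<forall>\<delta>. cg \<delta> \<ge> 0" "t *\<^sub>R \<alpha> - \<beta> = (\<Sum>\<delta>\<in>S. cg \<delta> *\<^sub>R \<delta>)" using pos_decomp[OF g] by blast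
  define q where "q \<delta> = cb \<delta> + cg \<delta>" for \<delta>
  have q0: "q \<delta> \<ge> 0" for \<delta> using cb cg by (simp add: q_def)
  have "(\<Sum>\<delta>\<in>S. q \<delta> *\<^sub>R \<delta>) = \<beta> + (t *\<^sub>R \<alpha> - \<beta>)"
    by (simp add: q_def scaleR_add_left sum.distrib flip: cb(2) cg(2))
  then have sumq: "(\<Sum>\<delta>\<in>S. q \<delta> *\<^sub>R \<delta>) = t *\<^sub>R \<alpha>" by simp
  define p where "p = (\<Sum>\<delta>\<in>S-{\<alpha>}. q \<delta> *\<^sub>R \<delta>)"
  have split: "(\<Sum>\<delta>\<in>S. q \<delta> *\<^sub>R \<delta>) = q \<alpha> *\<^sub>R \<alpha> + p"
    by (simp add: p_def sum.remove[OF finS a])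
  define d where "d = t - q \<alpha>"
  have pd: "p = d *\<^sub>R \<alpha>" using sumq split by (simp add: d_def algebra_simps)
  have ph: "p \<bullet> h = (\<Sum>\<delta>\<in>S-{\<alpha>}. q \<delta> * (\<delta> \<bullet> h))" by (simp add: p_def inner_sum_left)
  have terms: "\<forall>\<delta>\<in>S-{\<alpha>}. q \<delta> * (\<delta> \<bullet> h) \<ge> 0" using q0 S_h by (simp add: less_imp_le)
  have aR: "\<alpha> \<noteq> 0" using nonzero S_R a by blast
  show ?thesis
  proof (cases "d \<le> 0")
    case True
    have "p \<bullet> h \<le> 0" using True S_h[OF a] pd by (simp add: mult_nonpos_nonneg less_imp_le)
    then have "(\<Sum>\<delta>\<in>S-{\<alpha>}. q \<delta> * (\<delta> \<bullet> h)) = 0" 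
    proof -
      have "0 \<le> (\<Sum>\<delta>\<in>S-{\<alpha>}. q \<delta> * (\<delta> \<bullet> h))" by (rule sum_nonneg) (use terms in auto)
      then show ?thesis using ph \<open>p \<bullet> h \<le> 0\<close> by linarith
    qed
    then have "\<forall>\<delta>\<in>S-{\<alpha>}. q \<delta> * (\<delta> \<bullet> h) = 0" using sum_nonneg_eq_0_iff[of "S-{\<alpha>}" "\<lambda>\<delta>. q \<delta> * (\<delta> \<bullet> h)"] finS terms by auto
    then have "\<forall>\<delta>\<in>S-{\<alpha>}. q \<delta> = 0" using S_h by (auto simp: mult_eq_0_iff) (metis DiffI empty_iff insert_iff less_irrefl)
    then have cb0: "\<forall>\<delta>\<in>S-{\<alpha>}. cb \<delta> = 0" using cb(1) cg(1) by (simp add: q_def add_nonneg_eq_0_iff)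
    have "\<beta> = cb \<alpha> *\<^sub>R \<alpha> + (\<Sum>\<delta>\<in>S-{\<alpha>}. cb \<delta> *\<^sub>R \<delta>)" using cb(2) by (simp add: sum.remove[OF finS a])
    also have "(\<Sum>\<delta>\<in>S-{\<alpha>}. cb \<delta> *\<^sub>R \<delta>) = 0" using cb0 by simp
    finally have be: "\<beta> = cb \<alpha> *\<^sub>R \<alpha>" by simp
    have "\<beta> \<noteq> 0" using b nonzero by (auto simp: Rp_def')
    then have "cb \<alpha> \<noteq> 0" using be by auto
    then have "cb \<alpha> > 0" using cb(1) by (simp add: order_less_le)
    then show ?thesis using be by blast
  next
    case False
    have "p \<bullet> \<alpha> = (\<Sum>\<delta>\<in>S-{\<alpha>}. q \<delta> * (\<delta> \<bullet> \<alpha>))" by (simp add: p_def inner_sum_left)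
    also have "\<dots> \<le> 0"
    proof (rule sum_nonpos)
      fix \<delta> assume "\<delta> \<in> S - {\<alpha>}"
      then have "\<delta> \<bullet> \<alpha> \<le> 0" using obtuse[of \<delta> \<alpha>] a by auto
      then show "q \<delta> * (\<delta> \<bullet> \<alpha>) \<le> 0" using q0 by (simp add: mult_nonneg_nonpos)
    qed
    finally have "p \<bullet> \<alpha> \<le> 0" .
    then have "p \<bullet> p \<le> 0" using False pd by (simp add: mult_nonneg_nonpos)
    then have "p = 0" by (meson inner_ge_zero inner_eq_zero_iff order_antisym)
    then show ?thesis using pd False aR by simp
  qed
qed

end

lemma card_split_elem: "finite X \<Longrightarrow> card X = card (X - {a}) + (if a \<in> X then 1 else 0)"
proof (cases "a \<in> X")
  case True
  assume f: "finite X"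
  have "card X = Suc (card (X - {a}))" using card.remove[OF f True] .
  then show ?thesis using True by simp
qed simp

lemma discrete_ivt: "\<not> P (0::nat) \<Longrightarrow> P n \<Longrightarrow> \<exists>i<n. \<not> P i \<and> P (Suc i)"
proof (induction n)
  case 0 then show ?case by simp
next
  case (Suc n)
  show ?case
  proof (cases "P n")
    case True
    then obtain i where "i < n" "\<not> P i" "P (Suc i)" using Suc by blast
    then show ?thesis using less_SucI by blast
  next
    case False then show ?thesis using Suc.prems(2) by blast
  qed
qed

context rsys begin

lemma W_inv_R: "w \<in> refl_group A \<Longrightarrow> A \<subseteq> R \<Longrightarrow> w \<beta> \<in> R \<Longrightarrow> \<beta> \<in> R"
  using W_R[OF RG_inv_mem, of w A "w \<beta>"] by simp

lemma S_R': "S \<subseteq> R" using S_R by blast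

definition M :: "('a \<Rightarrow> 'a) \<Rightarrow> 'a set" where
  "M w = {\<beta>\<in>Rp. (1/2) *\<^sub>R \<beta> \<notin> R \<and> w \<beta> \<in> Rn}"

definition nn :: "('a \<Rightarrow> 'a) \<Rightarrow> nat" where
  "nn w = card (M w)"

lemma finM: "finite (M w)" using finRp by (auto simp: M_def)

lemma S_indiv: "\<alpha> \<in> S \<Longrightarrow> (1/2) *\<^sub>R \<alpha> \<notin> R"
proof
  assume a: "\<alpha> \<in> S" "(1/2) *\<^sub>R \<alpha> \<in> R"
  then have "(1/2) *\<^sub>R \<alpha> \<in> Rp" using S_h[OF a(1)] by (simp add: Rp_def')
  moreover have "\<alpha> = (1/2) *\<^sub>R \<alpha> + (1/2) *\<^sub>R \<alpha>" by (simp flip: scaleR_add_left)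
  ultimately show False using S_not_sum[OF a(1)] by blast
qed

lemma step_key:
  assumes a: "\<alpha> \<in> S" and b: "\<beta> \<in> Rp" "(1/2) *\<^sub>R \<beta> \<notin> R" "\<beta> \<noteq> \<alpha>"
  shows "refl \<alpha> \<beta> \<in> Rp" "(1/2) *\<^sub>R refl \<alpha> \<beta> \<notin> R" "refl \<alpha> \<beta> \<noteq> \<alpha>"
proof -
  have aR: "\<alpha> \<in> R" using S_R a by blast
  have bR: "\<beta> \<in> R" using b by (simp add: Rp_def')
  have sR: "refl \<alpha> \<beta> \<in> R" using refl_in_R aR bR by blast
  show "refl \<alpha> \<beta> \<in> Rp"
  proof (rule ccontr)
    assume "refl \<alpha> \<beta> \<notin> Rp"
    then have "refl \<alpha> \<beta> \<in> Rn" using R_split[OF sR] by blast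
    then obtain c where c: "c > 0" "\<beta> = c *\<^sub>R \<alpha>" using refl_pos_prop[OF a b(1)] by blast
    then have "c = 1/2 \<or> c = 1 \<or> c = 2" using prop_root[OF aR] bR by blast
    then show False
    proof (elim disjE)
      assume c2: "c = 1/2"
      have "\<beta> + \<beta> = (2 * c) *\<^sub>R \<alpha>" by (simp add: c(2) scaleR_2 flip: scaleR_add_left)
      also have "\<dots> = \<alpha>" using c2 by (simp add: mult.commute)
      finally show False using S_not_sum[OF a b(1) b(1)] by simp
    next
      assume "c = 1" then show False using c b by simp
    next
      assume "c = 2" then have "(1/2) *\<^sub>R \<beta> = \<alpha>" using c by simp
      then show False using b aR by simp
    qed
  qed
  show "(1/2) *\<^sub>R refl \<alpha> \<beta> \<notin> R"
  proof
    assume "(1/2) *\<^sub>R refl \<alpha> \<beta> \<in> R"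
    moreover have "(1/2) *\<^sub>R refl \<alpha> \<beta> = refl \<alpha> ((1/2) *\<^sub>R \<beta>)" by (rule linear_scale[OF refl_linear, symmetric])
    ultimately have "refl \<alpha> ((1/2) *\<^sub>R \<beta>) \<in> R" by simp
    then have "refl \<alpha> (refl \<alpha> ((1/2) *\<^sub>R \<beta>)) \<in> R" using refl_in_R aR by blast
    then show False using b by simp
  qed
  show "refl \<alpha> \<beta> \<noteq> \<alpha>"
  proof
    assume "refl \<alpha> \<beta> = \<alpha>"
    then have "refl \<alpha> (refl \<alpha> \<beta>) = refl \<alpha> \<alpha>" by simp
    then have "\<beta> = - \<alpha>" by simp
    then show False using b S_h[OF a] by (simp add: Rp_def')
  qed
qed

lemma M_step:
  assumes a: "\<alpha> \<in> S"
  shows "M (w \<circ> refl \<alpha>) - {\<alpha>} = refl \<alpha> ` (M w - {\<alpha>})"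
proof
  show "M (w \<circ> refl \<alpha>) - {\<alpha>} \<subseteq> refl \<alpha> ` (M w - {\<alpha>})"
  proof
    fix \<beta> assume "\<beta> \<in> M (w \<circ> refl \<alpha>) - {\<alpha>}"
    then have b: "\<beta> \<in> Rp" "(1/2) *\<^sub>R \<beta> \<notin> R" "\<beta> \<noteq> \<alpha>" "w (refl \<alpha> \<beta>) \<in> Rn" by (auto simp: M_def)
    have "refl \<alpha> \<beta> \<in> M w - {\<alpha>}" using step_key[OF a b(1-3)] b(4) by (auto simp: M_def)
    moreover have "\<beta> = refl \<alpha> (refl \<alpha> \<beta>)" by simp
    ultimately show "\<beta> \<in> refl \<alpha> ` (M w - {\<alpha>})" by blast
  qed
next
  show "refl \<alpha> ` (M w - {\<alpha>}) \<subseteq> M (w \<circ> refl \<alpha>) - {\<alpha>}"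
  proof
    fix \<beta> assume "\<beta> \<in> refl \<alpha> ` (M w - {\<alpha>})"
    then obtain \<gamma> where g: "\<gamma> \<in> Rp" "(1/2) *\<^sub>R \<gamma> \<notin> R" "\<gamma> \<noteq> \<alpha>" "w \<gamma> \<in> Rn" "\<beta> = refl \<alpha> \<gamma>"
      by (auto simp: M_def)
    show "\<beta> \<in> M (w \<circ> refl \<alpha>) - {\<alpha>}" using step_key[OF a g(1-3)] g(4,5) by (auto simp: M_def)
  qed
qed

lemma nn_step:
  assumes a: "\<alpha> \<in> S" and w: "w \<in> refl_group A" "A \<subseteq> R"
  shows "w \<alpha> \<in> Rp \<Longrightarrow> nn (w \<circ> refl \<alpha>) = Suc (nn w)"
    and "w \<alpha> \<in> Rn \<Longrightarrow> Suc (nn (w \<circ> refl \<alpha>)) = nn w"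
proof -
  have inj: "inj (refl \<alpha>)" by (rule inj_on_inverseI[where g="refl \<alpha>"]) simp
  have c: "card (M (w \<circ> refl \<alpha>) - {\<alpha>}) = card (M w - {\<alpha>})"
    unfolding M_step[OF a] by (rule card_image[OF inj_on_subset[OF inj]]) simp
  have aP: "\<alpha> \<in> Rp" "(1/2) *\<^sub>R \<alpha> \<notin> R" using a S_sub S_indiv by auto
  have e1: "\<alpha> \<in> M (w \<circ> refl \<alpha>) \<longleftrightarrow> w \<alpha> \<in> Rp"
  proof -
    have "w (refl \<alpha> \<alpha>) = - w \<alpha>" using linear_neg[OF RG_linear[OF w(1)]] by simp
    then show ?thesis using aP Rn_neg by (simp add: M_def)
  qed
  have e2: "\<alpha> \<in> M w \<longleftrightarrow> w \<alpha> \<in> Rn" using aP by (simp add: M_def)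
  have s1: "nn (w \<circ> refl \<alpha>) = card (M (w \<circ> refl \<alpha>) - {\<alpha>}) + (if \<alpha> \<in> M (w \<circ> refl \<alpha>) then 1 else 0)"
    unfolding nn_def by (rule card_split_elem[OF finM])
  have s2: "nn w = card (M w - {\<alpha>}) + (if \<alpha> \<in> M w then 1 else 0)"
    unfolding nn_def by (rule card_split_elem[OF finM])
  show "w \<alpha> \<in> Rp \<Longrightarrow> nn (w \<circ> refl \<alpha>) = Suc (nn w)"
  proof -
    assume p: "w \<alpha> \<in> Rp"
    then have "w \<alpha> \<notin> Rn" using Rp_not_Rn by blast
    then have "\<alpha> \<in> M (w \<circ> refl \<alpha>)" "\<alpha> \<notin> M w" using e1 e2 p by auto
    then show ?thesis using s1 s2 c by simp
  qed
  show "w \<alpha> \<in> Rn \<Longrightarrow> Suc (nn (w \<circ> refl \<alpha>)) = nn w"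
  proof -
    assume p: "w \<alpha> \<in> Rn"
    then have "w \<alpha> \<notin> Rp" using Rp_not_Rn by blast
    then have "\<alpha> \<notin> M (w \<circ> refl \<alpha>)" "\<alpha> \<in> M w" using e1 e2 p by auto
    then show ?thesis using s1 s2 c by simp
  qed
qed

lemma M_id: "M id = {}" by (auto simp: M_def Rp_def')

lemma nn_id[simp]: "nn id = 0" by (simp add: nn_def M_id)

lemma nn_id'[simp]: "nn (\<lambda>x. x) = 0" using nn_id unfolding id_def .

lemma wprod_RG: "set as \<subseteq> A \<Longrightarrow> wprod as \<in> refl_group A"
  using RG_words by blast

lemma wprod_snoc: "wprod (as @ [a]) = wprod as \<circ> refl a" by simp

lemma refl_refl_comp[simp]: "refl a \<circ> (refl a \<circ> f) = f"
  by (simp add: o_assoc)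

lemma nn_word: "set as \<subseteq> S \<Longrightarrow> nn (wprod as) \<le> length as"
proof (induction as rule: rev_induct)
  case Nil then show ?case by simp
next
  case (snoc a as)
  have w: "wprod as \<in> refl_group S" using snoc wprod_RG by auto
  have a: "a \<in> S" using snoc by auto
  have "wprod as a \<in> R" using W_R[OF w S_R'] S_R a by blast
  then consider "wprod as a \<in> Rp" | "wprod as a \<in> Rn" using R_split by blast
  then show ?case
  proof cases
    case 1
    have "nn (wprod as \<circ> refl a) = Suc (nn (wprod as))" using nn_step(1)[OF a w S_R' 1] .
    moreover have "nn (wprod as) \<le> length as" using snoc by auto
    moreover have "length (as @ [a]) = Suc (length as)" by simp
    ultimately show ?thesis unfolding wprod_snoc by linarith
  next
    case 2
    have "Suc (nn (wprod as \<circ> refl a)) = nn (wprod as)" using nn_step(2)[OF a w S_R' 2] .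
    moreover have "nn (wprod as) \<le> length as" using snoc by auto
    moreover have "length (as @ [a]) = Suc (length as)" by simp
    ultimately show ?thesis unfolding wprod_snoc by linarith
  qed
qed

lemma exchange:
  assumes bs: "set bs \<subseteq> S" and a: "\<alpha> \<in> Rp" and n: "wprod bs \<alpha> \<in> Rn"
  shows "\<exists>i<length bs. wprod bs \<circ> refl \<alpha> = wprod (take i bs @ drop (Suc i) bs)"
proof -
  let ?P = "\<lambda>i. wprod (drop i bs) \<alpha> \<in> Rp"
  have "\<not> ?P 0" using n by (auto simp: Rp_def')
  moreover have "?P (length bs)" using a by simp
  ultimately have "\<exists>i<length bs. \<not> ?P i \<and> ?P (Suc i)" by (rule discrete_ivt)
  then obtain i where i: "i < length bs" "\<not> ?P i" "?P (Suc i)" by blast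
  define u where "u = wprod (drop (Suc i) bs)"
  have dr: "drop i bs = bs ! i # drop (Suc i) bs" using i(1) by (simp add: Cons_nth_drop_Suc)
  have bi: "bs ! i \<in> S" using bs i(1) nth_mem by blast
  have u: "u \<in> refl_group S" unfolding u_def using bs set_drop_subset[of "Suc i" bs] by (intro wprod_RG) auto
  have uP: "u \<alpha> \<in> Rp" using i(3) by (simp add: u_def)
  have "u \<alpha> \<in> R" using uP by (simp add: Rp_def')
  then have "refl (bs ! i) (u \<alpha>) \<in> R" using refl_in_R[OF S_R[OF bi]] by blast
  moreover have "refl (bs ! i) (u \<alpha>) \<notin> Rp" using i(2) by (simp add: dr u_def)
  ultimately have "refl (bs ! i) (u \<alpha>) \<in> Rn" using R_split by blast
  then obtain c where c: "c > 0" "u \<alpha> = c *\<^sub>R bs ! i" using refl_pos_prop[OF bi uP] by blast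
  have rr: "refl (u \<alpha>) = refl (bs ! i)" using c by (simp add: refl_scale)
  have conj: "u \<circ> refl \<alpha> = refl (bs ! i) \<circ> u"
  proof
    fix x show "(u \<circ> refl \<alpha>) x = (refl (bs ! i) \<circ> u) x"
      using refl_conj[OF RG_linear[OF u] RG_inner[OF u], of \<alpha> x] rr by simp
  qed
  have "wprod bs = wprod (take i bs) \<circ> wprod (drop i bs)"
    by (simp flip: wprod_append)
  also have "\<dots> = wprod (take i bs) \<circ> refl (bs ! i) \<circ> u" by (simp add: dr u_def o_assoc)
  finally have "wprod bs \<circ> refl \<alpha> = wprod (take i bs) \<circ> refl (bs ! i) \<circ> (u \<circ> refl \<alpha>)" by (simp add: o_assoc)
  also have "\<dots> = wprod (take i bs) \<circ> u" by (simp add: conj o_assoc[symmetric])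
  also have "\<dots> = wprod (take i bs @ drop (Suc i) bs)" by (simp add: u_def)
  finally show ?thesis using i(1) by blast
qed

lemma reduced:
  assumes "set as \<subseteq> D" "D \<subseteq> S"
  shows "\<exists>bs. set bs \<subseteq> D \<and> wprod bs = wprod as \<and> length bs = nn (wprod as)"
  using assms(1)
proof (induction as rule: rev_induct)
  case Nil then show ?case by (intro exI[of _ "[]"]) simp
next
  case (snoc a as)
  then obtain bs where bs: "set bs \<subseteq> D" "wprod bs = wprod as" "length bs = nn (wprod as)" by auto
  have aD: "a \<in> D" using snoc by auto
  then have a: "a \<in> S" using assms(2) by blast
  have bsS: "set bs \<subseteq> S" using bs assms(2) by blast
  have w: "wprod as \<in> refl_group S" using snoc assms(2) wprod_RG[of as S] by auto
  have "wprod as a \<in> R" using W_R[OF w S_R'] S_R a by blast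
  then consider "wprod as a \<in> Rp" | "wprod as a \<in> Rn" using R_split by blast
  then show ?case
  proof cases
    case 1
    have e: "nn (wprod (as @ [a])) = Suc (nn (wprod as))" using nn_step(1)[OF a w S_R' 1] unfolding wprod_snoc .
    have "set (bs @ [a]) \<subseteq> D" using bs aD by simp
    moreover have "wprod (bs @ [a]) = wprod (as @ [a])" using bs(2) by simp
    moreover have "length (bs @ [a]) = Suc (length bs)" by simp
    then have "length (bs @ [a]) = nn (wprod (as @ [a]))" using e bs(3) by linarith
    ultimately show ?thesis by blast
  next
    case 2
    have nn2: "Suc (nn (wprod (as @ [a]))) = nn (wprod as)" using nn_step(2)[OF a w S_R' 2] unfolding wprod_snoc .
    have n2: "wprod bs a \<in> Rn" using 2 bs(2) by simp
    have aP: "a \<in> Rp" using a S_sub by blast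
    obtain i where i: "i < length bs" "wprod bs \<circ> refl a = wprod (take i bs @ drop (Suc i) bs)"
      using exchange[OF bsS aP n2] by blast
    have "set (take i bs @ drop (Suc i) bs) \<subseteq> D" using bs(1)
      using set_take_subset[of i bs] set_drop_subset[of "Suc i" bs] by auto
    moreover have "length (take i bs @ drop (Suc i) bs) = length bs - 1" using i(1) by simp
    then have "length (take i bs @ drop (Suc i) bs) = nn (wprod (as @ [a]))" using bs(3) nn2 by linarith
    moreover have "wprod (as @ [a]) = wprod bs \<circ> refl a" by (simp only: wprod_snoc bs(2))
    then have "wprod (take i bs @ drop (Suc i) bs) = wprod (as @ [a])" using i(2) by simp
    ultimately show ?thesis by blast
  qed
qed

lemma RG_reduced:
  assumes "w \<in> refl_group D" "D \<subseteq> S"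
  shows "\<exists>bs. set bs \<subseteq> D \<and> wprod bs = w \<and> length bs = nn w"
proof -
  obtain as where "set as \<subseteq> D" "w = wprod as" using assms(1) RG_words by blast
  then show ?thesis using reduced[OF _ assms(2), of as] by blast
qed

lemma nn0_id:
  assumes "w \<in> refl_group D" "D \<subseteq> S" "nn w = 0"
  shows "w = id"
  using RG_reduced[OF assms(1,2)] assms(3) by auto

lemma descent:
  assumes w: "w \<in> refl_group D" and D: "D \<subseteq> S" and n: "nn w > 0"
  shows "\<exists>\<alpha>\<in>D. w \<alpha> \<in> Rn \<and> w \<circ> refl \<alpha> \<in> refl_group D \<and> nn (w \<circ> refl \<alpha>) < nn w"
proof -
  obtain bs where bs: "set bs \<subseteq> D" "wprod bs = w" "length bs = nn w" using RG_reduced[OF w D] by blast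
  then have "bs \<noteq> []" using n by auto
  then obtain cs \<alpha> where cs: "bs = cs @ [\<alpha>]" using rev_exhaust by blast
  have aD: "\<alpha> \<in> D" using bs cs by auto
  have a: "\<alpha> \<in> S" using aD D by blast
  have "w = wprod cs \<circ> refl \<alpha>" using bs(2)[symmetric] cs by simp
  then have "w \<circ> refl \<alpha> = wprod cs \<circ> (refl \<alpha> \<circ> refl \<alpha>)" by (simp only: o_assoc)
  then have wc: "w \<circ> refl \<alpha> = wprod cs" by simp
  have csD: "set cs \<subseteq> D" using bs cs by auto
  have "nn (wprod cs) \<le> length cs" using nn_word csD D by blast
  then have lt: "nn (w \<circ> refl \<alpha>) < nn w" using wc bs(3) cs by simp
  have wS: "w \<in> refl_group S" using RG_mono[OF w D] .
  have "w \<alpha> \<in> R" using W_R[OF wS S_R'] S_R a by blast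
  moreover have "w \<alpha> \<notin> Rp" using nn_step(1)[OF a wS S_R'] lt by auto
  ultimately have "w \<alpha> \<in> Rn" using R_split by blast
  moreover have "w \<circ> refl \<alpha> \<in> refl_group D" using wc csD wprod_RG by simp
  ultimately show ?thesis using aD lt by blast
qed

end

context rsys begin

lemma refl_pos_in_RGS: "\<beta> \<in> Rp \<Longrightarrow> refl \<beta> \<in> refl_group S"
proof (induction "card {\<gamma>\<in>Rp. \<gamma> \<bullet> h < \<beta> \<bullet> h}" arbitrary: \<beta> rule: less_induct)
  case (less \<beta>)
  have bR: "\<beta> \<in> R" using less.prems by (simp add: Rp_def')
  have b0: "\<beta> \<noteq> 0" using nonzero[OF bR] .
  show ?case
  proof (cases "\<beta> \<in> S")
    case True then show ?thesis by (rule RG_gen)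
  next
    case False
    have "\<beta> \<bullet> \<beta> > 0" using b0 by simp
    then obtain \<gamma> where g: "\<gamma> \<in> S" "\<beta> \<bullet> \<gamma> > 0" using pos_ex_simple[OF less.prems] by blast
    have gR: "\<gamma> \<in> R" using S_R[OF g(1)] .
    show ?thesis
    proof (cases "\<exists>c. \<beta> = c *\<^sub>R \<gamma>")
      case True
      then obtain c where c: "\<beta> = c *\<^sub>R \<gamma>" by blast
      then have "c \<noteq> 0" using b0 by auto
      then have "refl \<beta> = refl \<gamma>" using c refl_scale by simp
      then show ?thesis using RG_gen[OF g(1)] by simp
    next
      case False
      define \<beta>' where "\<beta>' = refl \<gamma> \<beta>"
      have b'R: "\<beta>' \<in> R" unfolding \<beta>'_def by (rule refl_in_R[OF gR bR])
      have b'P: "\<beta>' \<in> Rp"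
      proof (rule ccontr)
        assume "\<beta>' \<notin> Rp"
        then have "\<beta>' \<in> Rn" using R_split[OF b'R] by blast
        then obtain c where "c > 0" "\<beta> = c *\<^sub>R \<gamma>" using refl_pos_prop[OF g(1) less.prems] \<beta>'_def by blast
        then show False using False by blast
      qed
      have g0: "\<gamma> \<bullet> \<gamma> > 0" using nonzero[OF gR] by simp
      define t where "t = 2 * (\<beta> \<bullet> \<gamma>) / (\<gamma> \<bullet> \<gamma>)"
      have t0: "t > 0" using g0 g(2) by (simp add: t_def)
      have "\<beta>' = \<beta> - t *\<^sub>R \<gamma>" by (simp add: \<beta>'_def refl_def t_def)
      then have "\<beta>' \<bullet> h = \<beta> \<bullet> h - t * (\<gamma> \<bullet> h)" by (simp add: inner_diff_left)
      moreover have "t * (\<gamma> \<bullet> h) > 0" using t0 S_h[OF g(1)] by simp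
      ultimately have lt: "\<beta>' \<bullet> h < \<beta> \<bullet> h" by linarith
      have "card {\<gamma>\<in>Rp. \<gamma> \<bullet> h < \<beta>' \<bullet> h} < card {\<gamma>\<in>Rp. \<gamma> \<bullet> h < \<beta> \<bullet> h}"
        by (rule psubset_card_mono) (use finRp lt b'P in auto)
      then have IH: "refl \<beta>' \<in> refl_group S" using less(1) b'P by blast
      have conj: "refl \<gamma> \<circ> refl \<beta> = refl \<beta>' \<circ> refl \<gamma>"
      proof
        fix x show "(refl \<gamma> \<circ> refl \<beta>) x = (refl \<beta>' \<circ> refl \<gamma>) x"
          using refl_conj[OF refl_linear refl_inner, of \<gamma> \<beta> x] by (simp add: \<beta>'_def)
      qed
      have "refl \<beta> = refl \<gamma> \<circ> (refl \<gamma> \<circ> refl \<beta>)" by simp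
      also have "\<dots> = refl \<gamma> \<circ> (refl \<beta>' \<circ> refl \<gamma>)" using conj by simp
      finally have e: "refl \<beta> = refl \<gamma> \<circ> (refl \<beta>' \<circ> refl \<gamma>)" .
      show ?thesis unfolding e by (intro RG_comp RG_gen g(1) IH)
    qed
  qed
qed

lemma W_sub: "w \<in> W \<Longrightarrow> w \<in> refl_group S"
proof (induction rule: refl_group.induct)
  case id then show ?case by (rule refl_group.id)
next
  case (step w \<alpha>)
  have "refl \<alpha> \<in> refl_group S"
  proof (cases "\<alpha> \<in> Rp")
    case True then show ?thesis by (rule refl_pos_in_RGS)
  next
    case False
    then have "\<alpha> \<in> Rn" using R_split step by blast
    then have "- \<alpha> \<in> Rp" using Rn_neg by blast
    then have "refl (- \<alpha>) \<in> refl_group S" by (rule refl_pos_in_RGS)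
    then show ?thesis by (simp add: refl_neg)
  qed
  then show ?case using RG_comp step by blast
qed

lemma RGS_sub_W: "w \<in> refl_group S \<Longrightarrow> w \<in> W"
  using RG_mono S_R' by blast

lemma inv_linear: "w \<in> refl_group A \<Longrightarrow> linear (inv w)"
  using RG_linear RG_inv_mem by blast

lemma nn_inv_le:
  assumes w: "w \<in> refl_group A" "A \<subseteq> R"
  shows "nn w \<le> nn (inv w)"
proof -
  have iw: "inv w \<in> refl_group A" using RG_inv_mem[OF w(1)] .
  let ?f = "\<lambda>\<beta>. - w \<beta>"
  have inj: "inj_on ?f (M w)"
  proof (rule inj_onI)
    fix x y assume "- w x = - w y"
    then have "inv w (w x) = inv w (w y)" by simp
    then show "x = y" using w(1) by simp
  qed
  have sub: "?f ` M w \<subseteq> M (inv w)"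
  proof
    fix \<gamma> assume "\<gamma> \<in> ?f ` M w"
    then obtain \<beta> where b: "\<beta> \<in> Rp" "(1/2) *\<^sub>R \<beta> \<notin> R" "w \<beta> \<in> Rn" "\<gamma> = - w \<beta>" by (auto simp: M_def)
    have g1: "\<gamma> \<in> Rp" using b(3) Rn_neg b(4) by blast
    have g2: "(1/2) *\<^sub>R \<gamma> \<notin> R"
    proof
      assume "(1/2) *\<^sub>R \<gamma> \<in> R"
      then have "inv w ((1/2) *\<^sub>R \<gamma>) \<in> R" using W_R[OF iw w(2)] by blast
      moreover have "inv w ((1/2) *\<^sub>R \<gamma>) = - ((1/2) *\<^sub>R \<beta>)"
        using b(4) linear_scale[OF inv_linear[OF w(1)]] linear_neg[OF inv_linear[OF w(1)]] w(1) by simp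
      ultimately have "- ((1/2) *\<^sub>R \<beta>) \<in> R" by simp
      then have "- (- ((1/2) *\<^sub>R \<beta>)) \<in> R" by (rule neg_R)
      then have "(1/2) *\<^sub>R \<beta> \<in> R" by simp
      then show False using b(2) by simp
    qed
    have "inv w \<gamma> = - \<beta>" using b(4) linear_neg[OF inv_linear[OF w(1)]] w(1) by simp
    then have g3: "inv w \<gamma> \<in> Rn" using b(1) Rn_neg by simp
    show "\<gamma> \<in> M (inv w)" using g1 g2 g3 by (simp add: M_def)
  qed
  show ?thesis unfolding nn_def by (rule card_inj_on_le[OF inj sub finM])
qed

lemma nn_inv:
  assumes w: "w \<in> refl_group A" "A \<subseteq> R"
  shows "nn (inv w) = nn w"
proof -
  have "nn (inv w) \<le> nn (inv (inv w))" using nn_inv_le[OF RG_inv_mem[OF w(1)] w(2)] .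
  moreover have "inv (inv w) = w" using RG_bij[OF w(1)] by (simp add: inv_inv_eq)
  ultimately show ?thesis using nn_inv_le[OF w] by simp
qed

lemma fund:
  assumes D: "D \<subseteq> S" "D \<subseteq> Dp" "Dp \<subseteq> Rp"
    and cl: "\<And>g \<alpha>. g \<in> refl_group D \<Longrightarrow> \<alpha> \<in> D \<Longrightarrow> g \<alpha> \<in> Rn \<Longrightarrow> - g \<alpha> \<in> Dp"
    and x: "\<forall>\<beta>\<in>Dp. x \<bullet> \<beta> \<ge> 0" and y: "\<forall>\<beta>\<in>Dp. y \<bullet> \<beta> \<ge> 0"
    and g: "g \<in> refl_group D" "g x = y"
  shows "x = y \<and> g \<in> refl_group {\<alpha>\<in>D. x \<bullet> \<alpha> = 0}"
  using g
proof (induction "nn g" arbitrary: g rule: less_induct)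
  case (less g)
  show ?case
  proof (cases "nn g = 0")
    case True
    then have "g = id" using nn0_id[OF less.prems(1) D(1)] by blast
    then show ?thesis using less.prems refl_group.id by simp
  next
    case False
    then obtain \<alpha> where a: "\<alpha> \<in> D" "g \<alpha> \<in> Rn" "g \<circ> refl \<alpha> \<in> refl_group D" "nn (g \<circ> refl \<alpha>) < nn g"
      using descent[OF less.prems(1) D(1)] by blast
    have "g x \<bullet> g \<alpha> = x \<bullet> \<alpha>" by (rule RG_inner[OF less.prems(1)])
    then have "y \<bullet> g \<alpha> = x \<bullet> \<alpha>" using less.prems(2) by simp
    moreover have "x \<bullet> \<alpha> \<ge> 0" using x a(1) D(2) by blast
    moreover have "y \<bullet> (- g \<alpha>) \<ge> 0" using y cl[OF less.prems(1) a(1,2)] by blast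
    ultimately have xa: "x \<bullet> \<alpha> = 0" by (simp add: inner_minus_right)
    then have rx: "refl \<alpha> x = x" by (simp add: refl_def inner_commute)
    have "(g \<circ> refl \<alpha>) x = y" using rx less.prems(2) by simp
    then have IH: "x = y \<and> g \<circ> refl \<alpha> \<in> refl_group {\<alpha>\<in>D. x \<bullet> \<alpha> = 0}" using less(1)[OF a(4) a(3)] by blast
    have "refl \<alpha> \<in> refl_group {\<alpha>\<in>D. x \<bullet> \<alpha> = 0}" using a(1) xa by (intro RG_gen) simp
    then have "(g \<circ> refl \<alpha>) \<circ> refl \<alpha> \<in> refl_group {\<alpha>\<in>D. x \<bullet> \<alpha> = 0}"
      by (rule RG_comp[OF IH[THEN conjunct2]])
    then have "g \<in> refl_group {\<alpha>\<in>D. x \<bullet> \<alpha> = 0}" by (simp add: o_assoc[symmetric])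
    then show ?thesis using IH by blast
  qed
qed

lemma exist_anti: "\<exists>w\<in>W. \<forall>\<beta>\<in>Rp. w x \<bullet> \<beta> \<le> 0"
proof -
  let ?f = "\<lambda>w. w x \<bullet> h"
  have "finite (?f ` W)" using W_finite by simp
  moreover have "?f ` W \<noteq> {}" using refl_group.id by blast
  ultimately obtain m where m: "m \<in> ?f ` W" "\<And>y. y \<in> ?f ` W \<Longrightarrow> \<not> y < m" using ex_min_if_finite[of "?f ` W"] by blast
  then obtain w0 where w0: "w0 \<in> W" "?f w0 = m" by blast
  have "\<forall>\<beta>\<in>Rp. w0 x \<bullet> \<beta> \<le> 0"
  proof (rule ccontr)
    assume "\<not> (\<forall>\<beta>\<in>Rp. w0 x \<bullet> \<beta> \<le> 0)"
    then obtain \<beta> where b: "\<beta> \<in> Rp" "w0 x \<bullet> \<beta> > 0" by force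
    have bR: "\<beta> \<in> R" using b by (simp add: Rp_def')
    have w1: "refl \<beta> \<circ> w0 \<in> W" using refl_group.step[OF w0(1) bR] .
    define t where "t = 2 * (w0 x \<bullet> \<beta>) / (\<beta> \<bullet> \<beta>)"
    have "t > 0" using b(2) nonzero[OF bR] by (simp add: t_def)
    moreover have "\<beta> \<bullet> h > 0" using b by (simp add: Rp_def')
    ultimately have tp: "t * (\<beta> \<bullet> h) > 0" by simp
    have "?f (refl \<beta> \<circ> w0) = w0 x \<bullet> h - t * (\<beta> \<bullet> h)" by (simp add: refl_def t_def inner_diff_left)
    then have "?f (refl \<beta> \<circ> w0) < m" using tp w0(2) by linarith
    then show False using m(2) w1 by blast
  qed
  then show ?thesis using w0(1) by blast
qed

end

context rsys begin

lemma comp_inv_r: "w \<in> refl_group A \<Longrightarrow> w \<circ> inv w = id"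
  by (auto simp: fun_eq_iff)

lemma comp_inv_l: "w \<in> refl_group A \<Longrightarrow> inv w \<circ> w = id"
  by (auto simp: fun_eq_iff)

lemma inv_refl_comp:
  assumes w: "w \<in> refl_group A"
  shows "inv (refl \<delta> \<circ> w) = inv w \<circ> refl \<delta>"
proof (rule inv_unique_comp)
  show "(refl \<delta> \<circ> w) \<circ> (inv w \<circ> refl \<delta>) = id"
  proof -
    have "(refl \<delta> \<circ> w) \<circ> (inv w \<circ> refl \<delta>) = refl \<delta> \<circ> (w \<circ> inv w) \<circ> refl \<delta>" by (simp add: o_assoc)
    also have "\<dots> = id" using comp_inv_r[OF w] by simp
    finally show ?thesis .
  qed
  show "(inv w \<circ> refl \<delta>) \<circ> (refl \<delta> \<circ> w) = id"
    using w by (simp add: fun_eq_iff)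
qed

lemma wl_neg: "l \<in> weight_lattice R \<Longrightarrow> - l \<in> weight_lattice R"
  by (auto simp: weight_lattice_def)

lemma wl_W:
  assumes w: "w \<in> W" and l: "l \<in> weight_lattice R"
  shows "w l \<in> weight_lattice R"
  unfolding weight_lattice_def
proof (rule CollectI, rule ballI)
  fix \<alpha> assume a: "\<alpha> \<in> R"
  have iw: "inv w \<in> W" using RG_inv_mem[OF w] .
  have b: "inv w \<alpha> \<in> R" using W_R[OF iw _ a] by simp
  have "w l \<bullet> \<alpha> = w l \<bullet> w (inv w \<alpha>)" using w by simp
  also have "\<dots> = l \<bullet> inv w \<alpha>" by (rule RG_inner[OF w])
  finally have e1: "w l \<bullet> \<alpha> = l \<bullet> inv w \<alpha>" .
  have "\<alpha> \<bullet> \<alpha> = w (inv w \<alpha>) \<bullet> w (inv w \<alpha>)" using w by simp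
  also have "\<dots> = inv w \<alpha> \<bullet> inv w \<alpha>" by (rule RG_inner[OF w])
  finally have e2: "\<alpha> \<bullet> \<alpha> = inv w \<alpha> \<bullet> inv w \<alpha>" .
  show "2 * (w l \<bullet> \<alpha>) / (\<alpha> \<bullet> \<alpha>) \<in> \<int>" unfolding e1 e2 using l b by (simp add: weight_lattice_def)
qed

lemma anti_iff: "x \<in> antidominant R h \<longleftrightarrow> x \<in> weight_lattice R \<and> (\<forall>\<alpha>\<in>Rp. x \<bullet> \<alpha> \<le> 0)"
proof
  assume "x \<in> antidominant R h"
  then obtain y where y: "y \<in> dominant R h" "x = - y" by (auto simp: antidominant_def)
  then show "x \<in> weight_lattice R \<and> (\<forall>\<alpha>\<in>Rp. x \<bullet> \<alpha> \<le> 0)"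
    using wl_neg by (auto simp: dominant_def)
next
  assume a: "x \<in> weight_lattice R \<and> (\<forall>\<alpha>\<in>Rp. x \<bullet> \<alpha> \<le> 0)"
  then have "- x \<in> dominant R h" using wl_neg by (auto simp: dominant_def)
  moreover have "x = - (- x)" by simp
  ultimately show "x \<in> antidominant R h" unfolding antidominant_def by blast
qed

lemma weyl_length_eq:
  assumes w: "w \<in> W"
  shows "weyl_length R h w = nn w"
proof -
  have f: "foldr (\<lambda>\<alpha> f. refl \<alpha> \<circ> f) as id = wprod as" for as by (simp add: wprod_def)
  obtain bs where bs: "set bs \<subseteq> S" "wprod bs = w" "length bs = nn w"
    using RG_reduced[OF W_sub[OF w] order_refl] by blast
  show ?thesis unfolding weyl_length_def f
  proof (rule Least_equality)
    show "\<exists>as. length as = nn w \<and> set as \<subseteq> S \<and> w = wprod as" using bs by blast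
  next
    fix n assume "\<exists>as. length as = n \<and> set as \<subseteq> S \<and> w = wprod as"
    then obtain as where "length as = n" "set as \<subseteq> S" "w = wprod as" by blast
    then show "nn w \<le> n" using nn_word by blast
  qed
qed

lemma anti_simple:
  assumes mu: "\<forall>\<alpha>\<in>Rp. \<mu> \<bullet> \<alpha> \<le> 0" and v: "v \<in> W" and g: "\<gamma> \<in> Rp"
  shows "\<mu> \<bullet> \<gamma> = 0 \<longrightarrow> v \<gamma> \<in> Rn \<longrightarrow> (\<exists>\<delta>\<in>S. \<mu> \<bullet> \<delta> = 0 \<and> v \<delta> \<in> Rn)"
  using g
proof (induction rule: pos_induct)
  case (simple \<beta>) then show ?case by blast
next
  case (sum \<beta>1 \<beta>2)
  show ?case
  proof (intro impI)
    assume z: "\<mu> \<bullet> (\<beta>1 + \<beta>2) = 0" and n: "v (\<beta>1 + \<beta>2) \<in> Rn"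
    have m1: "\<mu> \<bullet> \<beta>1 \<le> 0" "\<mu> \<bullet> \<beta>2 \<le> 0" using mu sum.hyps by auto
    then have z1: "\<mu> \<bullet> \<beta>1 = 0" "\<mu> \<bullet> \<beta>2 = 0" using z by (simp_all add: inner_add_right)
    have "v (\<beta>1 + \<beta>2) = v \<beta>1 + v \<beta>2" using linear_add[OF RG_linear[OF v]] by simp
    then have "v \<beta>1 \<bullet> h + v \<beta>2 \<bullet> h < 0" using n by (simp add: inner_add_left)
    then have "v \<beta>1 \<bullet> h < 0 \<or> v \<beta>2 \<bullet> h < 0" by linarith
    moreover have "v \<beta>1 \<in> R" "v \<beta>2 \<in> R" using W_R[OF v order_refl] sum.hyps by (auto simp: Rp_def')
    ultimately have "v \<beta>1 \<in> Rn \<or> v \<beta>2 \<in> Rn" by blast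
    then show "\<exists>\<delta>\<in>S. \<mu> \<bullet> \<delta> = 0 \<and> v \<delta> \<in> Rn" using sum.IH z1 by blast
  qed
qed

definition anti :: "'a \<Rightarrow> bool" where "anti x \<longleftrightarrow> (\<forall>\<alpha>\<in>Rp. x \<bullet> \<alpha> \<le> 0)"

lemma min_N:
  assumes w: "w \<in> W" "anti (w l)"
    and min: "\<And>w'. w' \<in> W \<Longrightarrow> anti (w' l) \<Longrightarrow> nn w \<le> nn w'"
    and b: "\<beta> \<in> Rp"
  shows "w \<beta> \<in> Rn \<longleftrightarrow> l \<bullet> \<beta> > 0"
proof
  have bR: "\<beta> \<in> R" using b by (simp add: Rp_def')
  have wb: "w \<beta> \<in> R" using W_R[OF w(1) order_refl bR] .
  have inn: "w l \<bullet> w \<beta> = l \<bullet> \<beta>" by (rule RG_inner[OF w(1)])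
  show "l \<bullet> \<beta> > 0 \<Longrightarrow> w \<beta> \<in> Rn"
  proof -
    assume p: "l \<bullet> \<beta> > 0"
    have "w \<beta> \<notin> Rp"
    proof
      assume "w \<beta> \<in> Rp"
      then have "w l \<bullet> w \<beta> \<le> 0" using w(2) by (simp add: anti_def)
      then show False using inn p by simp
    qed
    then show ?thesis using R_split[OF wb] by blast
  qed
  show "w \<beta> \<in> Rn \<Longrightarrow> l \<bullet> \<beta> > 0"
  proof (rule ccontr)
    assume n: "w \<beta> \<in> Rn" and np: "\<not> l \<bullet> \<beta> > 0"
    define \<mu> where "\<mu> = w l"
    define \<gamma> where "\<gamma> = - w \<beta>"
    have gP: "\<gamma> \<in> Rp" using n Rn_neg \<gamma>_def by blast
    have mu: "\<forall>\<alpha>\<in>Rp. \<mu> \<bullet> \<alpha> \<le> 0" using w(2) by (simp add: anti_def \<mu>_def)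
    have "\<mu> \<bullet> \<gamma> \<le> 0" using mu gP by blast
    then have "l \<bullet> \<beta> \<ge> 0" using inn by (simp add: \<mu>_def \<gamma>_def inner_minus_right)
    then have lb: "l \<bullet> \<beta> = 0" using np by simp
    then have mg: "\<mu> \<bullet> \<gamma> = 0" using inn by (simp add: \<mu>_def \<gamma>_def inner_minus_right)
    have iw: "inv w \<in> W" using RG_inv_mem[OF w(1)] .
    have "inv w \<gamma> = - \<beta>" using linear_neg[OF inv_linear[OF w(1)]] w(1) by (simp add: \<gamma>_def)
    then have ig: "inv w \<gamma> \<in> Rn" using b Rn_neg by simp
    obtain \<delta> where d: "\<delta> \<in> S" "\<mu> \<bullet> \<delta> = 0" "inv w \<delta> \<in> Rn"
      using anti_simple[OF mu iw gP] mg ig by blast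
    have dR: "\<delta> \<in> R" using S_R[OF d(1)] .
    define w' where "w' = refl \<delta> \<circ> w"
    have w'W: "w' \<in> W" unfolding w'_def using refl_group.step[OF w(1) dR] .
    have "w' l = \<mu>" using d(2) by (simp add: w'_def \<mu>_def refl_def inner_commute)
    then have aw': "anti (w' l)" using w(2) by (simp add: \<mu>_def)
    have "nn w' = nn (inv w')" using nn_inv[OF w'W order_refl] by simp
    also have "inv w' = inv w \<circ> refl \<delta>" unfolding w'_def by (rule inv_refl_comp[OF w(1)])
    finally have e1: "nn w' = nn (inv w \<circ> refl \<delta>)" .
    have "Suc (nn (inv w \<circ> refl \<delta>)) = nn (inv w)" using nn_step(2)[OF d(1) iw order_refl d(3)] .
    also have "nn (inv w) = nn w" using nn_inv[OF w(1) order_refl] .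
    finally have "nn w' < nn w" using e1 by linarith
    then show False using min[OF w'W aw'] by linarith
  qed
qed

lemma N_unique:
  assumes w: "w1 \<in> W" "w2 \<in> W" and N: "\<And>\<beta>. \<beta> \<in> Rp \<Longrightarrow> w1 \<beta> \<in> Rn \<longleftrightarrow> w2 \<beta> \<in> Rn"
  shows "w1 = w2"
proof -
  define u where "u = w2 \<circ> inv w1"
  have uW: "u \<in> refl_group S" unfolding u_def by (intro RG_comp W_sub RG_inv_mem w)
  have "M u = {}"
  proof -
    have "u \<beta> \<in> Rp" if b: "\<beta> \<in> Rp" for \<beta>
    proof -
      have bR: "\<beta> \<in> R" using b by (simp add: Rp_def')
      define \<alpha> where "\<alpha> = inv w1 \<beta>"
      have aR: "\<alpha> \<in> R" unfolding \<alpha>_def using W_R[OF RG_inv_mem[OF w(1)] order_refl bR] .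
      have w1a: "w1 \<alpha> = \<beta>" using w(1) by (simp add: \<alpha>_def)
      have ua: "u \<beta> = w2 \<alpha>" by (simp add: u_def \<alpha>_def)
      have w2a: "w2 \<alpha> \<in> R" using W_R[OF w(2) order_refl aR] .
      show ?thesis
      proof (cases "\<alpha> \<in> Rp")
        case True
        then have "w1 \<alpha> \<notin> Rn" using w1a b Rp_not_Rn by simp
        then have "w2 \<alpha> \<notin> Rn" using N[OF True] by blast
        then have "w2 \<alpha> \<in> Rp" using R_split[OF w2a] by blast
        then show ?thesis using ua by simp
      next
        case False
        then have "\<alpha> \<in> Rn" using R_split[OF aR] by blast
        then have na: "- \<alpha> \<in> Rp" using Rn_neg by blast
        have l1: "linear w1" "linear w2" using RG_linear w by auto
        have "w1 (- \<alpha>) = - \<beta>" using linear_neg[OF l1(1)] w1a by simp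
        then have "w1 (- \<alpha>) \<in> Rn" using b Rn_neg by simp
        then have "w2 (- \<alpha>) \<in> Rn" using N[OF na] by simp
        then have "- w2 \<alpha> \<in> Rn" using linear_neg[OF l1(2)] by simp
        then have "- (- w2 \<alpha>) \<in> Rp" using Rn_neg[of "- w2 \<alpha>"] by blast
        then have "w2 \<alpha> \<in> Rp" by simp
        then show ?thesis using ua by simp
      qed
    qed
    then show ?thesis unfolding M_def using Rp_not_Rn by blast
  qed
  then have "nn u = 0" by (simp add: nn_def)
  then have "u = id" using nn0_id[OF uW order_refl] by blast
  then have "u \<circ> w1 = w1" by simp
  moreover have "u \<circ> w1 = w2" unfolding u_def using comp_inv_l[OF w(1)] by (simp add: o_assoc[symmetric])
  ultimately show ?thesis by simp
qed

lemma vmin_spec: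
  assumes l: "l \<in> weight_lattice R"
  shows "vmin R h l \<in> W \<and> vmin R h l l \<in> antidominant R h"
proof -
  let ?P = "\<lambda>w. w \<in> W \<and> w l \<in> antidominant R h \<and>
      (\<forall>w'\<in>W. w' l \<in> antidominant R h \<longrightarrow> weyl_length R h w \<le> weyl_length R h w')"
  have antiA: "w l \<in> antidominant R h \<longleftrightarrow> anti (w l)" if "w \<in> W" for w
    using anti_iff wl_W[OF that l] by (simp add: anti_def)
  obtain w0 where w0: "w0 \<in> W" "\<forall>\<beta>\<in>Rp. w0 l \<bullet> \<beta> \<le> 0" using exist_anti by blast
  then have "w0 \<in> W \<and> anti (w0 l)" by (simp add: anti_def)
  then obtain w where w: "w \<in> W \<and> anti (w l)" "\<And>w'. w' \<in> W \<and> anti (w' l) \<Longrightarrow> nn w \<le> nn w'"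
    using ex_has_least_nat[of "\<lambda>w. w \<in> W \<and> anti (w l)" w0 nn] by blast
  have Pw: "?P w"
    using w antiA weyl_length_eq by auto
  have uniq: "w' = w" if P': "?P w'" for w'
  proof -
    have m1: "nn w' \<le> nn w2" if "w2 \<in> W" "anti (w2 l)" for w2
      using P' that antiA weyl_length_eq by auto
    have "w' \<in> W" "anti (w' l)" using P' antiA by auto
    then have N1: "\<And>\<beta>. \<beta> \<in> Rp \<Longrightarrow> w' \<beta> \<in> Rn \<longleftrightarrow> l \<bullet> \<beta> > 0" using min_N m1 by blast
    have N2: "\<And>\<beta>. \<beta> \<in> Rp \<Longrightarrow> w \<beta> \<in> Rn \<longleftrightarrow> l \<bullet> \<beta> > 0" using min_N w by blast
    show ?thesis using N_unique[of w' w] N1 N2 \<open>w' \<in> W\<close> w by blast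
  qed
  have "?P (vmin R h l)" unfolding vmin_def using Pw uniq by (rule theI)
  then show ?thesis by blast
qed

end

lemma poly_fun_sum: "finite A \<Longrightarrow> (\<And>i. i \<in> A \<Longrightarrow> f i \<in> poly_fun) \<Longrightarrow> (\<lambda>x. \<Sum>i\<in>A. f i x) \<in> poly_fun"
proof (induction A rule: finite_induct)
  case empty then show ?case using poly_fun.const[of 0] by simp
next
  case (insert a A)
  have "(\<lambda>x. f a x + (\<Sum>i\<in>A. f i x)) \<in> poly_fun" using insert by (intro poly_fun.add) auto
  then show ?case using insert by simp
qed

lemma poly_fun_prod: "finite A \<Longrightarrow> (\<And>i. i \<in> A \<Longrightarrow> f i \<in> poly_fun) \<Longrightarrow> (\<lambda>x. \<Prod>i\<in>A. f i x) \<in> poly_fun"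
proof (induction A rule: finite_induct)
  case empty then show ?case using poly_fun.const[of 1] by simp
next
  case (insert a A)
  have "(\<lambda>x. f a x * (\<Prod>i\<in>A. f i x)) \<in> poly_fun" using insert by (intro poly_fun.mult) auto
  then show ?case using insert by simp
qed

lemma poly_fun_sq:
  assumes u: "u \<in> refl_group A"
  shows "(\<lambda>x. complex_of_real ((u x - a) \<bullet> (u x - a))) \<in> poly_fun"
proof -
  have ux: "u x \<bullet> b = x \<bullet> inv u b" for x b
  proof -
    have "u x \<bullet> u (inv u b) = x \<bullet> inv u b" by (rule RG_inner[OF u])
    then show ?thesis using u by simp
  qed
  define F where "F = (\<lambda>x. \<Sum>b\<in>Basis. (complex_of_real (x \<bullet> inv u b) + (- complex_of_real (a \<bullet> b))) *
                                  (complex_of_real (x \<bullet> inv u b) + (- complex_of_real (a \<bullet> b))))"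
  have "F \<in> poly_fun" unfolding F_def
    by (intro poly_fun_sum poly_fun.mult poly_fun.add poly_fun.lin poly_fun.const) simp
  moreover have "F = (\<lambda>x. complex_of_real ((u x - a) \<bullet> (u x - a)))"
  proof
    fix x
    have "(u x - a) \<bullet> (u x - a) = (\<Sum>b\<in>Basis. ((u x - a) \<bullet> b) * ((u x - a) \<bullet> b))" by (rule euclidean_inner)
    also have "\<dots> = (\<Sum>b\<in>Basis. (x \<bullet> inv u b - a \<bullet> b) * (x \<bullet> inv u b - a \<bullet> b))"
      by (simp add: inner_diff_left ux)
    finally show "F x = complex_of_real ((u x - a) \<bullet> (u x - a))" by (simp add: F_def)
  qed
  ultimately show ?thesis by simp
qed

context rsys begin

lemma rho_simple:
  assumes k: "multiplicity R k" and a: "\<alpha> \<in> S"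
  shows "rho R h k \<bullet> \<alpha> \<ge> 0"
proof -
  have aR: "\<alpha> \<in> R" using S_R[OF a] .
  have k0: "\<And>\<beta>. \<beta> \<in> R \<Longrightarrow> k \<beta> \<ge> 0" and kW: "\<And>w \<beta>. w \<in> W \<Longrightarrow> \<beta> \<in> R \<Longrightarrow> k (w \<beta>) = k \<beta>"
    using k by (auto simp: multiplicity_def)
  define F where "F \<beta> = k \<beta> * (\<beta> \<bullet> \<alpha>)" for \<beta>
  define Q where "Q = {\<beta>\<in>Rp. refl \<alpha> \<beta> \<in> Rp}"
  have QR: "Q \<subseteq> Rp" by (auto simp: Q_def)
  have finQ: "finite Q" using finRp QR finite_subset by blast
  have e: "rho R h k \<bullet> \<alpha> = (1/2) * (\<Sum>\<beta>\<in>Rp. F \<beta>)"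
    by (simp add: rho_def F_def inner_sum_left)
  have split: "(\<Sum>\<beta>\<in>Rp. F \<beta>) = (\<Sum>\<beta>\<in>Rp - Q. F \<beta>) + (\<Sum>\<beta>\<in>Q. F \<beta>)"
    by (rule sum.subset_diff[OF QR finRp])
  have img: "refl \<alpha> ` Q = Q"
  proof
    show "refl \<alpha> ` Q \<subseteq> Q" by (auto simp: Q_def)
    show "Q \<subseteq> refl \<alpha> ` Q"
    proof
      fix \<beta> assume b: "\<beta> \<in> Q"
      then have "refl \<alpha> \<beta> \<in> Q" by (auto simp: Q_def)
      moreover have "\<beta> = refl \<alpha> (refl \<alpha> \<beta>)" by simp
      ultimately show "\<beta> \<in> refl \<alpha> ` Q" by blast
    qed
  qed
  have inj: "inj_on (refl \<alpha>) Q" by (rule inj_on_inverseI[where g="refl \<alpha>"]) simp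
  have "(\<Sum>\<beta>\<in>Q. F \<beta>) = (\<Sum>\<beta>\<in>refl \<alpha> ` Q. F \<beta>)" using img by simp
  also have "\<dots> = (\<Sum>\<beta>\<in>Q. F (refl \<alpha> \<beta>))" by (rule sum.reindex[OF inj, unfolded comp_def])
  also have "\<dots> = (\<Sum>\<beta>\<in>Q. - F \<beta>)"
  proof (rule sum.cong[OF refl])
    fix \<beta> assume "\<beta> \<in> Q"
    then have bR: "\<beta> \<in> R" by (auto simp: Q_def Rp_def')
    have "k (refl \<alpha> \<beta>) = k \<beta>" using kW[OF RG_gen[OF aR] bR] .
    moreover have "refl \<alpha> \<beta> \<bullet> refl \<alpha> \<alpha> = \<beta> \<bullet> \<alpha>" by (rule refl_inner)
    then have "refl \<alpha> \<beta> \<bullet> \<alpha> = - (\<beta> \<bullet> \<alpha>)" by (simp add: inner_minus_right)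
    ultimately show "F (refl \<alpha> \<beta>) = - F \<beta>" by (simp add: F_def)
  qed
  also have "\<dots> = - (\<Sum>\<beta>\<in>Q. F \<beta>)" by (simp add: sum_negf)
  finally have Q0: "(\<Sum>\<beta>\<in>Q. F \<beta>) = 0" by simp
  have "(\<Sum>\<beta>\<in>Rp - Q. F \<beta>) \<ge> 0"
  proof (rule sum_nonneg)
    fix \<beta> assume b: "\<beta> \<in> Rp - Q"
    then have bP: "\<beta> \<in> Rp" and bR: "\<beta> \<in> R" by (auto simp: Rp_def')
    have "refl \<alpha> \<beta> \<in> R" using refl_in_R[OF aR bR] .
    moreover have "refl \<alpha> \<beta> \<notin> Rp" using b by (auto simp: Q_def)
    ultimately have "refl \<alpha> \<beta> \<in> Rn" using R_split by blast
    then obtain c where c: "c > 0" "\<beta> = c *\<^sub>R \<alpha>" using refl_pos_prop[OF a bP] by blast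
    have "F \<beta> = k \<beta> * (c * (\<alpha> \<bullet> \<alpha>))" using c(2) by (simp add: F_def)
    moreover have "k \<beta> \<ge> 0" using k0[OF bR] .
    ultimately show "F \<beta> \<ge> 0" using c(1) by simp
  qed
  then show ?thesis using e split Q0 by simp
qed

lemma rho_dom:
  assumes k: "multiplicity R k" and b: "\<beta> \<in> Rp"
  shows "rho R h k \<bullet> \<beta> \<ge> 0"
  using b
proof (induction rule: pos_induct)
  case (simple \<beta>) then show ?case using rho_simple[OF k] by blast
next
  case (sum \<beta>1 \<beta>2) then show ?case by (simp add: inner_add_right)
qed

lemma shifted_eq:
  assumes v: "v \<in> W"
  shows "l - inv v \<rho> = inv v (v l - \<rho>)"
  using linear_diff[OF inv_linear[OF v]] v by simp

lemma key_K:
  assumes k: "multiplicity R k" and I: "I \<subseteq> S"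
    and l: "l \<in> parabolic_dominant R h I" and m: "m \<in> parabolic_dominant R h I"
    and u: "u \<in> refl_group I" and eq: "u (shifted R h k l) = shifted R h k m"
  shows "l = m"
proof -
  define \<rho> where "\<rho> = rho R h k"
  have lP: "l \<in> weight_lattice R" and mP: "m \<in> weight_lattice R"
    using l m by (auto simp: parabolic_dominant_def)
  define v where "v = vmin R h l"
  define v' where "v' = vmin R h m"
  have v: "v \<in> W" "v l \<in> antidominant R h" using vmin_spec[OF lP] by (simp_all add: v_def)
  have v': "v' \<in> W" "v' m \<in> antidominant R h" using vmin_spec[OF mP] by (simp_all add: v'_def)
  define \<mu> where "\<mu> = v l"
  define \<mu>' where "\<mu>' = v' m"
  have mu: "\<forall>\<alpha>\<in>Rp. \<mu> \<bullet> \<alpha> \<le> 0" using v(2) anti_iff by (simp add: \<mu>_def)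
  have mu': "\<forall>\<alpha>\<in>Rp. \<mu>' \<bullet> \<alpha> \<le> 0" using v'(2) anti_iff by (simp add: \<mu>'_def)
  have sl: "shifted R h k l = inv v (\<mu> - \<rho>)"
    unfolding shifted_def using shifted_eq[OF v(1)] by (simp add: v_def \<mu>_def \<rho>_def)
  have sm: "shifted R h k m = inv v' (\<mu>' - \<rho>)"
    unfolding shifted_def using shifted_eq[OF v'(1)] by (simp add: v'_def \<mu>'_def \<rho>_def)
  have IS: "I \<subseteq> R" using I S_R' by blast
  have uW: "u \<in> W" using RG_mono[OF u IS] .
  define g where "g = v' \<circ> u \<circ> inv v"
  have gS: "g \<in> refl_group S" unfolding g_def
    by (intro RG_comp W_sub v'(1) uW RG_inv_mem v(1))
  have g1: "g (\<mu> - \<rho>) = \<mu>' - \<rho>" using eq sl sm v'(1) by (simp add: g_def)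
  have gl: "linear g" using RG_linear[OF gS] .
  have g2: "g (\<rho> - \<mu>) = \<rho> - \<mu>'"
  proof -
    have "g (\<rho> - \<mu>) = g (- (\<mu> - \<rho>))" by simp
    also have "\<dots> = - g (\<mu> - \<rho>)" by (rule linear_neg[OF gl])
    finally show ?thesis using g1 by simp
  qed
  have rd: "\<forall>\<beta>\<in>Rp. \<rho> \<bullet> \<beta> \<ge> 0" using rho_dom[OF k] by (simp add: \<rho>_def)
  have x: "\<forall>\<beta>\<in>Rp. (\<rho> - \<mu>) \<bullet> \<beta> \<ge> 0" using rd mu by (simp add: inner_diff_left) (meson diff_ge_0_iff_ge order_trans)
  have y: "\<forall>\<beta>\<in>Rp. (\<rho> - \<mu>') \<bullet> \<beta> \<ge> 0" using rd mu' by (simp add: inner_diff_left) (meson diff_ge_0_iff_ge order_trans)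
  have cl: "- g' \<alpha> \<in> Rp" if "g' \<in> refl_group S" "\<alpha> \<in> S" "g' \<alpha> \<in> Rn" for g' \<alpha>
    using that Rn_neg by blast
  have F: "\<rho> - \<mu> = \<rho> - \<mu>' \<and> g \<in> refl_group {\<alpha>\<in>S. (\<rho> - \<mu>) \<bullet> \<alpha> = 0}"
  proof (rule fund[where D=S and Dp=Rp])
    show "\<And>g \<alpha>. g \<in> refl_group S \<Longrightarrow> \<alpha> \<in> S \<Longrightarrow> g \<alpha> \<in> Rn \<Longrightarrow> - g \<alpha> \<in> Rp" by (rule cl)
  qed (use S_sub x y gS g2 in auto)
  then have mm: "\<mu> = \<mu>'" by simp
  have fixmu: "g \<mu> = \<mu>"
  proof (rule RG_fix[OF F[THEN conjunct2]])
    fix \<alpha> assume "\<alpha> \<in> {\<alpha>\<in>S. (\<rho> - \<mu>) \<bullet> \<alpha> = 0}"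
    then have a: "\<alpha> \<in> S" "(\<rho> - \<mu>) \<bullet> \<alpha> = 0" by auto
    have "\<rho> \<bullet> \<alpha> \<ge> 0" "\<mu> \<bullet> \<alpha> \<le> 0" using rd mu a(1) S_sub by auto
    then have "\<mu> \<bullet> \<alpha> = 0" using a(2) by (simp add: inner_diff_left)
    then show "refl \<alpha> \<mu> = \<mu>" by (simp add: refl_def inner_commute)
  qed
  have "inv v \<mu> = l" using v(1) by (simp add: \<mu>_def)
  then have "v' (u l) = \<mu>" using fixmu by (simp add: g_def)
  then have "v' (u l) = v' m" using mm by (simp add: \<mu>'_def)
  then have "inv v' (v' (u l)) = inv v' (v' m)" by simp
  then have ul: "u l = m" using v'(1) by simp
  define Dp where "Dp = Rp \<inter> span I"
  have spanI: "g' x \<in> span I" if "g' \<in> refl_group I" "x \<in> span I" for g' x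
  proof (rule RG_preserve[OF that(1) _ that(2)])
    fix a y assume ay: "a \<in> I" "y \<in> span I"
    show "refl a y \<in> span I" unfolding refl_def
      by (rule span_diff[OF ay(2) span_scale[OF span_base[OF ay(1)]]])
  qed
  have cl2: "- g' \<alpha> \<in> Dp" if "g' \<in> refl_group I" "\<alpha> \<in> I" "g' \<alpha> \<in> Rn" for g' \<alpha>
  proof -
    have "- g' \<alpha> \<in> Rp" using that(3) Rn_neg by blast
    moreover have "g' \<alpha> \<in> span I" using spanI[OF that(1)] that(2) span_base by blast
    then have "- g' \<alpha> \<in> span I" using span_neg by blast
    ultimately show ?thesis by (simp add: Dp_def)
  qed
  have IDp: "I \<subseteq> Dp" using I S_sub span_base by (auto simp: Dp_def)
  have xl: "\<forall>\<beta>\<in>Dp. l \<bullet> \<beta> \<ge> 0" using l by (auto simp: parabolic_dominant_def parabolic_pos_roots_def Dp_def)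
  have xm: "\<forall>\<beta>\<in>Dp. m \<bullet> \<beta> \<ge> 0" using m by (auto simp: parabolic_dominant_def parabolic_pos_roots_def Dp_def)
  have "l = m \<and> u \<in> refl_group {\<alpha>\<in>I. l \<bullet> \<alpha> = 0}"
  proof (rule fund[where D=I and Dp=Dp])
    show "\<And>g \<alpha>. g \<in> refl_group I \<Longrightarrow> \<alpha> \<in> I \<Longrightarrow> g \<alpha> \<in> Rn \<Longrightarrow> - g \<alpha> \<in> Dp" by (rule cl2)
  qed (use I IDp xl xm u ul in \<open>auto simp: Dp_def\<close>)
  then show ?thesis by simp
qed

end

theorem mainTheorem9:
  fixes R :: "'a::euclidean_space set" and h :: 'a and k :: "'a \<Rightarrow> real" and I :: "'a set"
  assumes "root_system R"
    and "\<forall>\<alpha>\<in>R. \<alpha> \<bullet> h \<noteq> 0"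
    and "multiplicity R k"
    and "I \<subseteq> simple_roots R h"
  shows "\<forall>l\<in>parabolic_dominant R h I. \<forall>m\<in>parabolic_dominant R h I. l \<noteq> m \<longrightarrow>
    (\<exists>q\<in>poly_fun. (\<forall>w\<in>refl_group I. \<forall>x. q (w x) = q x) \<and>
        q (shifted R h k l) \<noteq> q (shifted R h k m))"
proof (intro ballI impI)
  fix l m
  assume l: "l \<in> parabolic_dominant R h I" and m: "m \<in> parabolic_dominant R h I" and ne: "l \<noteq> m"
  interpret rsys R h by unfold_locales (use assms(1,2) in auto)
  define G where "G = refl_group I"
  define a where "a = shifted R h k m"
  define f where "f u y = complex_of_real ((u y - a) \<bullet> (u y - a))" for u :: "'a \<Rightarrow> 'a" and y
  define q where "q x = (\<Prod>u\<in>G. f u x)" for x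
  have IR: "I \<subseteq> R" using assms(4) S_R' by blast
  have GW: "G \<subseteq> W" unfolding G_def using RG_mono[OF _ IR] by blast
  have finG: "finite G" using finite_subset[OF GW W_finite] .
  have qp: "q \<in> poly_fun"
  proof -
    have "(\<lambda>x. \<Prod>u\<in>G. f u x) \<in> poly_fun"
      by (rule poly_fun_prod[OF finG]) (unfold f_def G_def, rule poly_fun_sq)
    then show ?thesis by (simp add: q_def[abs_def])
  qed
  have inv: "q (w x) = q x" if w: "w \<in> refl_group I" for w x
  proof -
    have bij: "bij_betw (\<lambda>u. u \<circ> w) G G"
      unfolding bij_betw_def
    proof
      show "inj_on (\<lambda>u. u \<circ> w) G"
      proof (rule inj_onI)
        fix u1 u2 assume "u1 \<circ> w = u2 \<circ> w"
        then have "(u1 \<circ> w) (inv w y) = (u2 \<circ> w) (inv w y)" for y by simp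
        then show "u1 = u2" using w by (auto simp: fun_eq_iff)
      qed
      show "(\<lambda>u. u \<circ> w) ` G = G"
      proof
        show "(\<lambda>u. u \<circ> w) ` G \<subseteq> G" using w RG_comp by (auto simp: G_def)
        show "G \<subseteq> (\<lambda>u. u \<circ> w) ` G"
        proof
          fix u assume u: "u \<in> G"
          have "u \<circ> inv w \<in> G" using RG_comp[OF _ RG_inv_mem[OF w]] u by (simp add: G_def)
          moreover have "u = (u \<circ> inv w) \<circ> w" using w by (auto simp: fun_eq_iff)
          ultimately show "u \<in> (\<lambda>u. u \<circ> w) ` G" by blast
        qed
      qed
    qed
    have "q (w x) = (\<Prod>u\<in>G. (\<lambda>u'. f u' x) (u \<circ> w))" by (simp add: q_def f_def)
    also have "\<dots> = (\<Prod>u\<in>G. f u x)" by (rule prod.reindex_bij_betw[OF bij])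
    finally show ?thesis by (simp add: q_def)
  qed
  have q0: "q a = 0"
  proof -
    have "id \<in> G" by (simp add: G_def refl_group.id)
    moreover have "f id a = 0" by (simp add: f_def)
    ultimately show ?thesis unfolding q_def using finG by (auto intro: prod_zero)
  qed
  have q1: "q (shifted R h k l) \<noteq> 0"
  proof -
    have "f u (shifted R h k l) \<noteq> 0" if u: "u \<in> G" for u
    proof
      assume "f u (shifted R h k l) = 0"
      then have "u (shifted R h k l) - a = 0" by (simp add: f_def)
      then have "u (shifted R h k l) = shifted R h k m" by (simp add: a_def)
      then have "l = m" using key_K[OF assms(3) assms(4) l m] u by (simp add: G_def)
      then show False using ne by simp
    qed
    then show ?thesis unfolding q_def using finG by simp
  qed
  show "\<exists>q\<in>poly_fun. (\<forall>w\<in>refl_group I. \<forall>x. q (w x) = q x) \<and>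
        q (shifted R h k l) \<noteq> q (shifted R h k m)"
    using qp inv q0 q1 by (intro bexI[of _ q]) (auto simp: a_def)
qed

end
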